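(* If $T$ is a tree of order $n\ge 3$ that is not isomorphic to the path $P_4$, then $\gamma^{\rm ID}(T) \le n - \gamma(T)$.
   Context: An identifying code of a graph $G$ is a set $C\subseteq V(G)$ such that every vertex $v$ has $N[v]\cap C\neq\emptyset$ and for all distinct vertices $u,v$, $N[u]\cap C \ne N[v]\cap C$, where $N[v]$ is the closed neighborhood. $\gamma^{\rm ID}(G)$ denotes the minimum size of an identifying code, and $\gamma(G)$ the domination number. *)

theory Defs
  imports Main "HOL-Library.Extended_Nat"
begin

definition simple_graph :: "'a set \<Rightarrow> ('a \<Rightarrow> 'a \<Rightarrow> bool) \<Rightarrow> bool" where
  "simple_graph V E \<longleftrightarrow> finite V \<and>
     (\<forall>u v. E u v \<longrightarrow> u \<in> V \<and> v \<in> V \<and> u \<noteq> v \<and> E v u)"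

definition connected_graph :: "'a set \<Rightarrow> ('a \<Rightarrow> 'a \<Rightarrow> bool) \<Rightarrow> bool" where
  "connected_graph V E \<longleftrightarrow> V \<noteq> {} \<and> (\<forall>u\<in>V. \<forall>v\<in>V. E\<^sup>*\<^sup>* u v)"

definition is_cycle :: "'a set \<Rightarrow> ('a \<Rightarrow> 'a \<Rightarrow> bool) \<Rightarrow> 'a list \<Rightarrow> bool" where
  "is_cycle V E xs \<longleftrightarrow> length xs \<ge> 3 \<and> distinct xs \<and> set xs \<subseteq> V \<and>
     (\<forall>i. Suc i < length xs \<longrightarrow> E (xs ! i) (xs ! Suc i)) \<and> E (last xs) (hd xs)"

definition acyclic_graph :: "'a set \<Rightarrow> ('a \<Rightarrow> 'a \<Rightarrow> bool) \<Rightarrow> bool" where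
  "acyclic_graph V E \<longleftrightarrow> \<not> (\<exists>xs. is_cycle V E xs)"

definition is_tree :: "'a set \<Rightarrow> ('a \<Rightarrow> 'a \<Rightarrow> bool) \<Rightarrow> bool" where
  "is_tree V E \<longleftrightarrow> simple_graph V E \<and> connected_graph V E \<and> acyclic_graph V E"

definition graph_iso :: "'a set \<Rightarrow> ('a \<Rightarrow> 'a \<Rightarrow> bool) \<Rightarrow> 'b set \<Rightarrow> ('b \<Rightarrow> 'b \<Rightarrow> bool) \<Rightarrow> bool" where
  "graph_iso V E W F \<longleftrightarrow> (\<exists>f. bij_betw f V W \<and> (\<forall>u\<in>V. \<forall>v\<in>V. E u v \<longleftrightarrow> F (f u) (f v)))"

definition path_vertices :: "nat \<Rightarrow> nat set" where
  "path_vertices n = {0..<n}"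

definition path_edges :: "nat \<Rightarrow> nat \<Rightarrow> nat \<Rightarrow> bool" where
  "path_edges n i j \<longleftrightarrow> i < n \<and> j < n \<and> (Suc i = j \<or> Suc j = i)"

definition closed_nbhd :: "'a set \<Rightarrow> ('a \<Rightarrow> 'a \<Rightarrow> bool) \<Rightarrow> 'a \<Rightarrow> 'a set" where
  "closed_nbhd V E v = {u \<in> V. u = v \<or> E v u}"

definition dominating_set :: "'a set \<Rightarrow> ('a \<Rightarrow> 'a \<Rightarrow> bool) \<Rightarrow> 'a set \<Rightarrow> bool" where
  "dominating_set V E D \<longleftrightarrow> D \<subseteq> V \<and> (\<forall>v\<in>V. closed_nbhd V E v \<inter> D \<noteq> {})"

definition identifying_code :: "'a set \<Rightarrow> ('a \<Rightarrow> 'a \<Rightarrow> bool) \<Rightarrow> 'a set \<Rightarrow> bool" where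
  "identifying_code V E C \<longleftrightarrow> C \<subseteq> V \<and> (\<forall>v\<in>V. closed_nbhd V E v \<inter> C \<noteq> {}) \<and>
     (\<forall>u\<in>V. \<forall>v\<in>V. u \<noteq> v \<longrightarrow> closed_nbhd V E u \<inter> C \<noteq> closed_nbhd V E v \<inter> C)"

text \<open>Domination number (V itself is always dominating, so the minimum exists for finite V).\<close>
definition domination_number :: "'a set \<Rightarrow> ('a \<Rightarrow> 'a \<Rightarrow> bool) \<Rightarrow> nat" where
  "domination_number V E = Min (card ` {D. dominating_set V E D})"

text \<open>Identifying code number, in enat: infinity if no identifying code exists.\<close>
definition id_code_number :: "'a set \<Rightarrow> ('a \<Rightarrow> 'a \<Rightarrow> bool) \<Rightarrow> enat" where
  "id_code_number V E = (INF C \<in> {C. identifying_code V E C}. enat (card C))"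

end

theory Submission
  imports Defs
begin



locale sg =
  fixes E :: "'a \<Rightarrow> 'a \<Rightarrow> bool"
  assumes symE: "E u v \<Longrightarrow> E v u"
    and irrE: "\<not> E u u"
begin

definition nb :: "'a set \<Rightarrow> 'a \<Rightarrow> 'a set" where
  "nb V x = {y \<in> V. E x y}"

definition tr :: "'a set \<Rightarrow> 'a set \<Rightarrow> 'a \<Rightarrow> 'a set" where
  "tr V C x = closed_nbhd V E x \<inter> C"

definition valid :: "'a set \<Rightarrow> bool" where
  "valid V \<longleftrightarrow> (\<forall>x\<in>V. nb V x \<noteq> {}) \<and>
     \<not> (\<exists>u\<in>V. \<exists>v. nb V u = {v} \<and> nb V v = {u}) \<and>
     \<not> (\<exists>a\<in>V. \<exists>b c d. distinct [a,b,c,d] \<and> nb V a = {b} \<and> nb V b = {a,c} \<and> nb V c = {b,d} \<and> nb V d = {c})"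

definition good :: "'a set \<Rightarrow> bool" where
  "good V \<longleftrightarrow> (\<exists>C D. identifying_code V E C \<and> dominating_set V E D \<and> card C + card D \<le> card V)"

lemma nb_iff: "y \<in> nb V x \<longleftrightarrow> y \<in> V \<and> E x y"
  by (simp add: nb_def)

lemma cn_eq: "x \<in> V \<Longrightarrow> closed_nbhd V E x = insert x (nb V x)"
  by (auto simp: closed_nbhd_def nb_def)

lemma nb_sub: "nb V x \<subseteq> V" by (auto simp: nb_def)

lemma nb_diff: "nb (V - X) x = nb V x - X"
  by (auto simp: nb_def)

lemma nbE: "nb V x = S \<Longrightarrow> y \<in> S \<Longrightarrow> E x y \<and> y \<in> V"
  by (auto simp: nb_def)

lemma nb_ne: "y \<in> nb V x \<Longrightarrow> x \<noteq> y"
  using irrE by (auto simp: nb_def)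

lemma nb_sym: "y \<in> nb V x \<Longrightarrow> x \<in> V \<Longrightarrow> x \<in> nb V y"
  using symE by (auto simp: nb_def)

lemma low_degree_vertex:
  assumes fin: "finite W" and ne: "W \<noteq> {}" and acy: "acyclic_graph W E"
  shows "\<exists>w\<in>W. \<forall>y1 y2. y1 \<in> nb W w \<longrightarrow> y2 \<in> nb W w \<longrightarrow> y1 = y2"
proof (rule ccontr)
  assume "\<not> ?thesis"
  then have two: "\<forall>w\<in>W. \<exists>y1 y2. y1 \<in> nb W w \<and> y2 \<in> nb W w \<and> y1 \<noteq> y2" by blast
  have nxt: "\<forall>w\<in>W. \<forall>p. \<exists>y. y \<in> nb W w \<and> y \<noteq> p"
    using two by metis
  obtain x0 where x0: "x0 \<in> W" using ne by blast
  define step where "step = (\<lambda>(p::'a, c::'a). (c, SOME y. y \<in> nb W c \<and> y \<noteq> p))"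
  define f where "f n = (step ^^ n) (x0, x0)" for n
  define x where "x n = snd (f n)" for n
  have f_Suc: "f (Suc n) = (x n, SOME y. y \<in> nb W (x n) \<and> y \<noteq> fst (f n))" for n
    by (simp add: f_def x_def step_def split: prod.splits)
  have xW: "x n \<in> W" for n
  proof (induction n)
    case 0 then show ?case using x0 by (simp add: x_def f_def)
  next
    case (Suc n)
    have "x (Suc n) = (SOME y. y \<in> nb W (x n) \<and> y \<noteq> fst (f n))"
      using f_Suc[of n] by (simp add: x_def)
    moreover have "\<exists>y. y \<in> nb W (x n) \<and> y \<noteq> fst (f n)" using nxt Suc by blast
    ultimately have "x (Suc n) \<in> nb W (x n)" by (metis (mono_tags, lifting) someI_ex)
    then show ?case by (simp add: nb_def)
  qed
  have xprop: "x (Suc n) \<in> nb W (x n) \<and> x (Suc n) \<noteq> fst (f n)" for n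
  proof -
    have "x (Suc n) = (SOME y. y \<in> nb W (x n) \<and> y \<noteq> fst (f n))"
      using f_Suc[of n] by (simp add: x_def)
    moreover have "\<exists>y. y \<in> nb W (x n) \<and> y \<noteq> fst (f n)" using nxt xW by blast
    ultimately show ?thesis by (metis (mono_tags, lifting) someI_ex)
  qed
  have adj: "E (x n) (x (Suc n))" for n using xprop[of n] by (simp add: nb_def)
  have nob: "x (Suc (Suc n)) \<noteq> x n" for n
    using xprop[of "Suc n"] f_Suc[of n] by simp
  have "\<not> inj_on x {0..card W}"
  proof
    assume "inj_on x {0..card W}"
    moreover have "x ` {0..card W} \<subseteq> W" using xW by auto
    ultimately have "card {0..card W} \<le> card W" using card_inj_on_le fin by blast
    then show False by simp
  qed
  then obtain i j where ij: "i \<noteq> j" "x i = x j" by (auto simp: inj_on_def)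
  define P where "P j \<longleftrightarrow> (\<exists>i<j. x i = x j)" for j
  have "\<exists>j. P j" using ij unfolding P_def by (metis linorder_neqE_nat)
  define j0 where "j0 = (LEAST j. P j)"
  have Pj0: "P j0" unfolding j0_def using \<open>\<exists>j. P j\<close> by (metis LeastI)
  then obtain i0 where i0: "i0 < j0" "x i0 = x j0" unfolding P_def by blast
  have minj: "\<not> P j" if "j < j0" for j using that unfolding j0_def by (metis not_less_Least)
  have injx: "inj_on x {i0..<j0}"
  proof (rule inj_onI)
    fix p q assume p: "p \<in> {i0..<j0}" and q: "q \<in> {i0..<j0}" and eq: "x p = x q"
    show "p = q"
    proof (rule ccontr)
      assume "p \<noteq> q"
      then show False
      proof (cases "p < q")
        case True then show ?thesis using minj[of q] q eq unfolding P_def by auto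
      next
        case False then have "q < p" using \<open>p \<noteq> q\<close> by simp
        then show ?thesis using minj[of p] p eq unfolding P_def by auto
      qed
    qed
  qed
  define xs where "xs = map x [i0..<j0]"
  have len: "length xs = j0 - i0" by (simp add: xs_def)
  have "j0 - i0 \<noteq> 1"
  proof
    assume "j0 - i0 = 1" then have "j0 = Suc i0" using i0 by simp
    then show False using adj[of i0] i0 irrE by simp
  qed
  moreover have "j0 - i0 \<noteq> 2"
  proof
    assume "j0 - i0 = 2" then have "j0 = Suc (Suc i0)" using i0 by simp
    then show False using nob[of i0] i0 by simp
  qed
  ultimately have len3: "length xs \<ge> 3" using len i0 by simp
  have "is_cycle W E xs"
    unfolding is_cycle_def
  proof (intro conjI allI impI)
    show "3 \<le> length xs" by fact
    show "distinct xs" using injx by (simp add: xs_def distinct_map)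
    show "set xs \<subseteq> W" using xW by (auto simp: xs_def)
    fix k assume "Suc k < length xs"
    then show "E (xs ! k) (xs ! Suc k)" using adj[of "i0 + k"] by (simp add: xs_def)
  next
    have "last xs = x (j0 - 1)" using i0 by (simp add: xs_def last_map)
    moreover have "hd xs = x j0" using i0 by (simp add: xs_def hd_map)
    moreover have "E (x (j0 - 1)) (x j0)" using adj[of "j0 - 1"] i0 by simp
    ultimately show "E (last xs) (hd xs)" by simp
  qed
  then show False using acy unfolding acyclic_graph_def by blast
qed

end



context sg begin

lemma cn_sub: "closed_nbhd V E x \<subseteq> V" by (auto simp: closed_nbhd_def)

lemma cn_diff: "x \<in> V - X \<Longrightarrow> closed_nbhd (V - X) E x = closed_nbhd V E x - X"
  by (auto simp: closed_nbhd_def)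

lemma attach:
  assumes XV: "X \<subseteq> V" and s: "s \<in> V - X" and att: "\<forall>u\<in>V-X. u \<noteq> s \<longrightarrow> nb V u \<inter> X = {}"
    and C': "identifying_code (V-X) E C'" and D': "dominating_set (V-X) E D'"
    and cd: "card C' + card D' \<le> card (V - X)"
    and AB: "A \<subseteq> X" "B \<subseteq> V"
    and ne: "\<forall>x\<in>X. tr V (C' \<union> A) x \<inter> X \<noteq> {}"
    and dist: "\<forall>x\<in>X. \<forall>u\<in>insert s X. u \<noteq> x \<longrightarrow> tr V (C' \<union> A) x \<noteq> tr V (C' \<union> A) u"
    and dom: "\<forall>x\<in>X. closed_nbhd V E x \<inter> (D' \<union> B) \<noteq> {}"
    and card: "card A + card B \<le> card X"
    and fin: "finite V"
  shows "good V"
proof -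
  define C where "C = C' \<union> A"
  define D where "D = D' \<union> B"
  have C'sub: "C' \<subseteq> V - X" using C' by (simp add: identifying_code_def)
  have D'sub: "D' \<subseteq> V - X" using D' by (simp add: dominating_set_def)
  have restr: "tr V C u \<inter> (V - X) = closed_nbhd (V - X) E u \<inter> C'" if "u \<in> V - X" for u
    using that C'sub AB unfolding tr_def C_def by (auto simp: closed_nbhd_def)
  have outside: "tr V C u \<inter> X = {}" if "u \<in> V - X" "u \<noteq> s" for u
    using that att unfolding tr_def by (auto simp: closed_nbhd_def nb_def)
  have idc: "identifying_code V E C"
    unfolding identifying_code_def
  proof (intro conjI ballI impI)
    show "C \<subseteq> V" using C'sub AB XV by (auto simp: C_def)
  next
    fix v assume v: "v \<in> V"
    show "closed_nbhd V E v \<inter> C \<noteq> {}"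
    proof (cases "v \<in> X")
      case True then show ?thesis using ne by (auto simp: tr_def C_def)
    next
      case False
      then have "closed_nbhd (V - X) E v \<inter> C' \<noteq> {}" using C' v by (simp add: identifying_code_def)
      then show ?thesis using restr[of v] v False by (auto simp: tr_def)
    qed
  next
    fix u v assume u: "u \<in> V" and v: "v \<in> V" and uv: "u \<noteq> v"
    show "closed_nbhd V E u \<inter> C \<noteq> closed_nbhd V E v \<inter> C"
    proof (cases "u \<in> X")
      case uX: True
      show ?thesis
      proof (cases "v \<in> insert s X")
        case True then show ?thesis using dist uX uv by (auto simp: tr_def C_def)
      next
        case False
        then have "tr V C v \<inter> X = {}" using outside v by auto
        moreover have "tr V C u \<inter> X \<noteq> {}" using ne uX by (simp add: C_def)
        ultimately show ?thesis by (auto simp: tr_def)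
      qed
    next
      case uX: False
      show ?thesis
      proof (cases "v \<in> X")
        case vX: True
        show ?thesis
        proof (cases "u = s")
          case True then show ?thesis using dist vX uv by (auto simp: tr_def C_def)
        next
          case False
          then have "tr V C u \<inter> X = {}" using outside u uX by auto
          moreover have "tr V C v \<inter> X \<noteq> {}" using ne vX by (simp add: C_def)
          ultimately show ?thesis by (auto simp: tr_def)
        qed
      next
        case vX: False
        have "closed_nbhd (V - X) E u \<inter> C' \<noteq> closed_nbhd (V - X) E v \<inter> C'"
          using C' u v uX vX uv by (simp add: identifying_code_def)
        then show ?thesis using restr[of u] restr[of v] u v uX vX by (auto simp: tr_def)
      qed
    qed
  qed
  have dsc: "dominating_set V E D"
    unfolding dominating_set_def
  proof (intro conjI ballI)
    show "D \<subseteq> V" using D'sub AB by (auto simp: D_def)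
  next
    fix v assume v: "v \<in> V"
    show "closed_nbhd V E v \<inter> D \<noteq> {}"
    proof (cases "v \<in> X")
      case True then show ?thesis using dom by (simp add: D_def)
    next
      case False
      then have "closed_nbhd (V - X) E v \<inter> D' \<noteq> {}" using D' v by (simp add: dominating_set_def)
      then show ?thesis using v False by (auto simp: closed_nbhd_def D_def)
    qed
  qed
  have finX: "finite X" using fin XV finite_subset by blast
  have "card C \<le> card C' + card A" unfolding C_def by (rule card_Un_le)
  moreover have "card D \<le> card D' + card B" unfolding D_def by (rule card_Un_le)
  moreover have "card (V - X) = card V - card X" using card_Diff_subset[OF finX XV] .
  moreover have "card X \<le> card V" using card_mono[OF fin XV] .
  ultimately have "card C + card D \<le> card V" using cd card by linarith
  then show ?thesis using idc dsc unfolding good_def by blast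
qed

lemma component:
  assumes XV: "X \<subseteq> V" and closed: "\<forall>x\<in>X. nb V x \<subseteq> X" and fin: "finite V"
    and g: "good (V - X)"
    and CX: "CX \<subseteq> X" and DX: "DX \<subseteq> X"
    and ne: "\<forall>x\<in>X. insert x (nb V x) \<inter> CX \<noteq> {}"
    and dist: "\<forall>x\<in>X. \<forall>y\<in>X. x \<noteq> y \<longrightarrow> insert x (nb V x) \<inter> CX \<noteq> insert y (nb V y) \<inter> CX"
    and dom: "\<forall>x\<in>X. insert x (nb V x) \<inter> DX \<noteq> {}"
    and card: "card CX + card DX \<le> card X"
  shows "good V"
proof -
  obtain C' D' where C': "identifying_code (V-X) E C'" and D': "dominating_set (V-X) E D'"
    and cd: "card C' + card D' \<le> card (V - X)" using g unfolding good_def by blast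
  define C where "C = C' \<union> CX"
  define D where "D = D' \<union> DX"
  have C'sub: "C' \<subseteq> V - X" using C' by (simp add: identifying_code_def)
  have D'sub: "D' \<subseteq> V - X" using D' by (simp add: dominating_set_def)
  have noadj: "nb V u \<inter> X = {}" if "u \<in> V - X" for u
    using that closed nb_sym by blast
  have trout: "closed_nbhd V E u \<inter> C = closed_nbhd (V - X) E u \<inter> C'"
      "closed_nbhd V E u \<inter> D = closed_nbhd (V - X) E u \<inter> D'" if "u \<in> V - X" for u
    using that noadj[OF that] C'sub D'sub CX DX by (auto simp: closed_nbhd_def nb_def C_def D_def)
  have trin: "closed_nbhd V E x \<inter> C = insert x (nb V x) \<inter> CX"
     "closed_nbhd V E x \<inter> D = insert x (nb V x) \<inter> DX" if "x \<in> X" for x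
  proof -
    have "closed_nbhd V E x = insert x (nb V x)" using that XV cn_eq by blast
    moreover have "insert x (nb V x) \<subseteq> X" using that closed by blast
    ultimately show "closed_nbhd V E x \<inter> C = insert x (nb V x) \<inter> CX"
       "closed_nbhd V E x \<inter> D = insert x (nb V x) \<inter> DX"
      using C'sub D'sub by (auto simp: C_def D_def)
  qed
  have idc: "identifying_code V E C"
    unfolding identifying_code_def
  proof (intro conjI ballI impI)
    show "C \<subseteq> V" using C'sub CX XV by (auto simp: C_def)
  next
    fix v assume v: "v \<in> V"
    show "closed_nbhd V E v \<inter> C \<noteq> {}"
    proof (cases "v \<in> X")
      case True then show ?thesis using ne trin by auto
    next
      case False
      then show ?thesis using C' v trout by (simp add: identifying_code_def)
    qed
  next
    fix u v assume u: "u \<in> V" and v: "v \<in> V" and uv: "u \<noteq> v"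
    show "closed_nbhd V E u \<inter> C \<noteq> closed_nbhd V E v \<inter> C"
    proof (cases "u \<in> X"; cases "v \<in> X")
      assume "u \<in> X" "v \<in> X" then show ?thesis using dist trin uv by auto
    next
      assume a: "u \<in> X" "v \<notin> X"
      then have "closed_nbhd V E u \<inter> C \<subseteq> X" using trin CX by auto
      moreover have "closed_nbhd V E v \<inter> C \<inter> X = {}" using trout[of v] a v C'sub by auto
      moreover have "closed_nbhd V E u \<inter> C \<noteq> {}" using ne trin a by auto
      ultimately show ?thesis by auto
    next
      assume a: "u \<notin> X" "v \<in> X"
      then have "closed_nbhd V E v \<inter> C \<subseteq> X" using trin CX by auto
      moreover have "closed_nbhd V E u \<inter> C \<inter> X = {}" using trout[of u] a u C'sub by auto
      moreover have "closed_nbhd V E v \<inter> C \<noteq> {}" using ne trin a by auto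
      ultimately show ?thesis by auto
    next
      assume a: "u \<notin> X" "v \<notin> X"
      then show ?thesis using C' u v uv trout by (simp add: identifying_code_def)
    qed
  qed
  have dsc: "dominating_set V E D"
    unfolding dominating_set_def
  proof (intro conjI ballI)
    show "D \<subseteq> V" using D'sub DX XV by (auto simp: D_def)
  next
    fix v assume v: "v \<in> V"
    show "closed_nbhd V E v \<inter> D \<noteq> {}"
    proof (cases "v \<in> X")
      case True then show ?thesis using dom trin by auto
    next
      case False then show ?thesis using D' v trout by (simp add: dominating_set_def)
    qed
  qed
  have finX: "finite X" using fin XV finite_subset by blast
  have "card C \<le> card C' + card CX" unfolding C_def by (rule card_Un_le)
  moreover have "card D \<le> card D' + card DX" unfolding D_def by (rule card_Un_le)
  moreover have "card (V - X) = card V - card X" using card_Diff_subset[OF finX XV] .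
  moreover have "card X \<le> card V" using card_mono[OF fin XV] .
  ultimately have "card C + card D \<le> card V" using cd card by linarith
  then show ?thesis using idc dsc unfolding good_def by blast
qed

lemma key_in_code:
  assumes C: "identifying_code V E C" and v: "v \<in> V" and l: "l \<in> V"
    and nv: "nb V v = {l, w}" and nl: "nb V l = {v}" and lw: "l \<noteq> w"
  shows "w \<in> C"
proof (rule ccontr)
  assume "w \<notin> C"
  have "closed_nbhd V E v \<inter> C = closed_nbhd V E l \<inter> C"
    using \<open>w \<notin> C\<close> by (auto simp: cn_eq[OF v] cn_eq[OF l] nv nl)
  moreover have "v \<noteq> l" using nb_ne nl by auto
  ultimately show False using C v l unfolding identifying_code_def by blast
qed

lemma removal_violation:
  assumes val: "valid V" and XV: "X \<subseteq> V" and s: "s \<in> V - X"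
    and att: "\<forall>u\<in>V-X. u \<noteq> s \<longrightarrow> nb V u \<inter> X = {}"
    and sne: "nb (V - X) s \<noteq> {}" and inv: "\<not> valid (V - X)"
  shows "(\<exists>y. nb (V-X) s = {y} \<and> nb V y = {s} \<and> y \<noteq> s \<and> y \<in> V - X)
    \<or> (\<exists>b c d. distinct [s,b,c,d] \<and> nb (V-X) s = {b} \<and> nb V b = {s,c} \<and> nb V c = {b,d} \<and> nb V d = {c} \<and> b \<in> V - X \<and> c \<in> V - X \<and> d \<in> V - X)
    \<or> (\<exists>a c d. distinct [a,s,c,d] \<and> nb V a = {s} \<and> nb (V-X) s = {a,c} \<and> nb V c = {s,d} \<and> nb V d = {c} \<and> a \<in> V - X \<and> c \<in> V - X \<and> d \<in> V - X)"
proof -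
  have same: "nb (V - X) u = nb V u" if "u \<in> V - X" "u \<noteq> s" for u
    using att that by (auto simp: nb_diff)
  have inV: "u \<in> V - X" if "u \<in> nb (V - X) x" for u x using that by (auto simp: nb_def)
  from inv consider (iso) "\<exists>x\<in>V-X. nb (V-X) x = {}"
    | (k2) "\<exists>u\<in>V-X. \<exists>v. nb (V-X) u = {v} \<and> nb (V-X) v = {u}"
    | (p4) "\<exists>a\<in>V-X. \<exists>b c d. distinct [a,b,c,d] \<and> nb (V-X) a = {b} \<and> nb (V-X) b = {a,c} \<and> nb (V-X) c = {b,d} \<and> nb (V-X) d = {c}"
    unfolding valid_def by blast
  then show ?thesis
  proof cases
    case iso
    then obtain x where x: "x \<in> V - X" "nb (V-X) x = {}" by blast
    then have "x \<noteq> s" using sne by auto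
    then show ?thesis using same[of x] x val unfolding valid_def by auto
  next
    case k2
    then obtain u v where u: "u \<in> V - X" and uv: "nb (V-X) u = {v}" "nb (V-X) v = {u}" by blast
    have v: "v \<in> V - X" using uv inV by blast
    have "u \<noteq> v" using uv nb_ne by blast
    show ?thesis
    proof (cases "u = s")
      case True then show ?thesis using same[of v] uv v \<open>u \<noteq> v\<close> by auto
    next
      case us: False
      show ?thesis
      proof (cases "v = s")
        case True then show ?thesis using same[of u] uv u \<open>u \<noteq> v\<close> us by auto
      next
        case False
        then have "nb V u = {v}" "nb V v = {u}" using same u v uv us by auto
        then show ?thesis using val u unfolding valid_def by auto
      qed
    qed
  next
    case p4
    then obtain a b c d where a: "a \<in> V - X" and dd: "distinct [a,b,c,d]"
      and n: "nb (V-X) a = {b}" "nb (V-X) b = {a,c}" "nb (V-X) c = {b,d}" "nb (V-X) d = {c}" by blast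
    have b: "b \<in> V - X" and c: "c \<in> V - X" and d: "d \<in> V - X" using n inV by blast+
    consider "s = a" | "s = b" | "s = c" | "s = d" | "s \<notin> {a,b,c,d}" by blast
    then show ?thesis
    proof cases
      case 1
      then have "distinct [s,b,c,d]" "nb (V-X) s = {b}" "nb V b = {s,c}" "nb V c = {b,d}" "nb V d = {c}"
        "b \<in> V - X" "c \<in> V - X" "d \<in> V - X"
        using dd n same b c d by auto
      then show ?thesis by blast
    next
      case 2
      then have "distinct [a,s,c,d]" "nb V a = {s}" "nb (V-X) s = {a,c}" "nb V c = {s,d}" "nb V d = {c}"
        "a \<in> V - X" "c \<in> V - X" "d \<in> V - X"
        using dd n same a c d by auto
      then show ?thesis by blast
    next
      case 3
      then have "distinct [d,s,b,a]" "nb V d = {s}" "nb (V-X) s = {d,b}" "nb V b = {s,a}" "nb V a = {b}"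
        "d \<in> V - X" "b \<in> V - X" "a \<in> V - X"
        using dd n same a b d by (auto simp: insert_commute)
      then show ?thesis by blast
    next
      case 4
      then have "distinct [s,c,b,a]" "nb (V-X) s = {c}" "nb V c = {s,b}" "nb V b = {c,a}" "nb V a = {b}"
        "c \<in> V - X" "b \<in> V - X" "a \<in> V - X"
        using dd n same a b c by (auto simp: insert_commute)
      then show ?thesis by blast
    next
      case 5
      then have "nb V a = {b}" "nb V b = {a,c}" "nb V c = {b,d}" "nb V d = {c}"
        using n same a b c d by auto
      then show ?thesis using val a dd unfolding valid_def by blast
    qed
  qed
qed

end


context sg begin

lemma comp_P3:
  assumes fin: "finite V" and dd: "distinct [c,a,b]" and aV: "c \<in> V"
    and n: "nb V c = {a,b}" "nb V a = {c}" "nb V b = {c}"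
    and gd: "good (V - {c,a,b})"
  shows "good V"
proof -
  have V: "a \<in> V" "b \<in> V"
    using nbE[OF n(1), of a] nbE[OF n(1), of b] by simp_all
  note dt = dd[simplified]
  have t: "insert c (nb V c) \<inter> {a,b} = {a,b}"
    "insert a (nb V a) \<inter> {a,b} = {a}"
    "insert b (nb V b) \<inter> {a,b} = {b}"
    using dt by (auto simp: n)
  have h1: "{c,a,b} \<subseteq> V" using aV V by simp
  have h2: "\<forall>xx\<in>{c,a,b}. nb V xx \<subseteq> {c,a,b}" by (simp add: n)
  have h3: "\<forall>xx\<in>{c,a,b}. insert xx (nb V xx) \<inter> {a,b} \<noteq> {}" by (simp only: ball_simps t) simp
  have h4: "\<forall>xx\<in>{c,a,b}. \<forall>yy\<in>{c,a,b}. xx \<noteq> yy \<longrightarrow> insert xx (nb V xx) \<inter> {a,b} \<noteq> insert yy (nb V yy) \<inter> {a,b}"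
    apply (simp only: ball_simps t)
    using dt by (simp add: set_eq_subset insert_subset) blast
  have h5: "\<forall>xx\<in>{c,a,b}. insert xx (nb V xx) \<inter> {c} \<noteq> {}" using dt by (simp add: n)
  have h6: "card {a,b} + card {c} \<le> card {c,a,b}" using dt by (auto simp: card_insert_if)
  show ?thesis
    by (rule component[OF h1 h2 fin gd _ _ h3 h4 h5 h6]) auto
qed

lemma comp_S112:
  assumes fin: "finite V" and dd: "distinct [v,l1,l2,w,x]" and aV: "v \<in> V"
    and n: "nb V v = {l1,l2,w}" "nb V l1 = {v}" "nb V l2 = {v}" "nb V w = {v,x}" "nb V x = {w}"
    and gd: "good (V - {v,l1,l2,w,x})"
  shows "good V"
proof -
  have V: "l1 \<in> V" "l2 \<in> V" "w \<in> V" "x \<in> V"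
    using nbE[OF n(1), of l1] nbE[OF n(1), of l2] nbE[OF n(1), of w] nbE[OF n(4), of x] by simp_all
  note dt = dd[simplified]
  have t: "insert v (nb V v) \<inter> {l1,v,w} = {l1,v,w}"
    "insert l1 (nb V l1) \<inter> {l1,v,w} = {l1,v}"
    "insert l2 (nb V l2) \<inter> {l1,v,w} = {v}"
    "insert w (nb V w) \<inter> {l1,v,w} = {v,w}"
    "insert x (nb V x) \<inter> {l1,v,w} = {w}"
    using dt by (auto simp: n)
  have h1: "{v,l1,l2,w,x} \<subseteq> V" using aV V by simp
  have h2: "\<forall>xx\<in>{v,l1,l2,w,x}. nb V xx \<subseteq> {v,l1,l2,w,x}" by (simp add: n)
  have h3: "\<forall>xx\<in>{v,l1,l2,w,x}. insert xx (nb V xx) \<inter> {l1,v,w} \<noteq> {}" by (simp only: ball_simps t) simp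
  have h4: "\<forall>xx\<in>{v,l1,l2,w,x}. \<forall>yy\<in>{v,l1,l2,w,x}. xx \<noteq> yy \<longrightarrow> insert xx (nb V xx) \<inter> {l1,v,w} \<noteq> insert yy (nb V yy) \<inter> {l1,v,w}"
    apply (simp only: ball_simps t)
    using dt by (simp add: set_eq_subset insert_subset) blast
  have h5: "\<forall>xx\<in>{v,l1,l2,w,x}. insert xx (nb V xx) \<inter> {v,w} \<noteq> {}" using dt by (simp add: n)
  have h6: "card {l1,v,w} + card {v,w} \<le> card {v,l1,l2,w,x}" using dt by (auto simp: card_insert_if)
  show ?thesis
    by (rule component[OF h1 h2 fin gd _ _ h3 h4 h5 h6]) auto
qed

lemma comp_S122:
  assumes fin: "finite V" and dd: "distinct [w,h,v1,l1,v2,l2]" and aV: "w \<in> V"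
    and n: "nb V w = {h,v1,v2}" "nb V h = {w}" "nb V v1 = {w,l1}" "nb V l1 = {v1}" "nb V v2 = {w,l2}" "nb V l2 = {v2}"
    and gd: "good (V - {w,h,v1,l1,v2,l2})"
  shows "good V"
proof -
  have V: "h \<in> V" "v1 \<in> V" "l1 \<in> V" "v2 \<in> V" "l2 \<in> V"
    using nbE[OF n(1), of h] nbE[OF n(1), of v1] nbE[OF n(3), of l1] nbE[OF n(1), of v2] nbE[OF n(5), of l2] by simp_all
  note dt = dd[simplified]
  have t: "insert w (nb V w) \<inter> {w,v1,v2} = {w,v1,v2}"
    "insert h (nb V h) \<inter> {w,v1,v2} = {w}"
    "insert v1 (nb V v1) \<inter> {w,v1,v2} = {w,v1}"
    "insert l1 (nb V l1) \<inter> {w,v1,v2} = {v1}"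
    "insert v2 (nb V v2) \<inter> {w,v1,v2} = {w,v2}"
    "insert l2 (nb V l2) \<inter> {w,v1,v2} = {v2}"
    using dt by (auto simp: n)
  have h1: "{w,h,v1,l1,v2,l2} \<subseteq> V" using aV V by simp
  have h2: "\<forall>xx\<in>{w,h,v1,l1,v2,l2}. nb V xx \<subseteq> {w,h,v1,l1,v2,l2}" by (simp add: n)
  have h3: "\<forall>xx\<in>{w,h,v1,l1,v2,l2}. insert xx (nb V xx) \<inter> {w,v1,v2} \<noteq> {}" by (simp only: ball_simps t) simp
  have h4: "\<forall>xx\<in>{w,h,v1,l1,v2,l2}. \<forall>yy\<in>{w,h,v1,l1,v2,l2}. xx \<noteq> yy \<longrightarrow> insert xx (nb V xx) \<inter> {w,v1,v2} \<noteq> insert yy (nb V yy) \<inter> {w,v1,v2}"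
    apply (simp only: ball_simps t)
    using dt by (simp add: set_eq_subset insert_subset) blast
  have h5: "\<forall>xx\<in>{w,h,v1,l1,v2,l2}. insert xx (nb V xx) \<inter> {w,v1,v2} \<noteq> {}" using dt by (simp add: n)
  have h6: "card {w,v1,v2} + card {w,v1,v2} \<le> card {w,h,v1,l1,v2,l2}" using dt by (auto simp: card_insert_if)
  show ?thesis
    by (rule component[OF h1 h2 fin gd _ _ h3 h4 h5 h6]) auto
qed

lemma comp_P5:
  assumes fin: "finite V" and dd: "distinct [a,b,c,d,e]" and aV: "a \<in> V"
    and n: "nb V a = {b}" "nb V b = {a,c}" "nb V c = {b,d}" "nb V d = {c,e}" "nb V e = {d}"
    and gd: "good (V - {a,b,c,d,e})"
  shows "good V"
proof -
  have V: "b \<in> V" "c \<in> V" "d \<in> V" "e \<in> V"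
    using nbE[OF n(1), of b] nbE[OF n(2), of c] nbE[OF n(3), of d] nbE[OF n(4), of e] by simp_all
  note dt = dd[simplified]
  have t: "insert a (nb V a) \<inter> {b,c,d} = {b}"
    "insert b (nb V b) \<inter> {b,c,d} = {b,c}"
    "insert c (nb V c) \<inter> {b,c,d} = {b,c,d}"
    "insert d (nb V d) \<inter> {b,c,d} = {c,d}"
    "insert e (nb V e) \<inter> {b,c,d} = {d}"
    using dt by (auto simp: n)
  have h1: "{a,b,c,d,e} \<subseteq> V" using aV V by simp
  have h2: "\<forall>xx\<in>{a,b,c,d,e}. nb V xx \<subseteq> {a,b,c,d,e}" by (simp add: n)
  have h3: "\<forall>xx\<in>{a,b,c,d,e}. insert xx (nb V xx) \<inter> {b,c,d} \<noteq> {}" by (simp only: ball_simps t) simp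
  have h4: "\<forall>xx\<in>{a,b,c,d,e}. \<forall>yy\<in>{a,b,c,d,e}. xx \<noteq> yy \<longrightarrow> insert xx (nb V xx) \<inter> {b,c,d} \<noteq> insert yy (nb V yy) \<inter> {b,c,d}"
    apply (simp only: ball_simps t)
    using dt by (simp add: set_eq_subset insert_subset) blast
  have h5: "\<forall>xx\<in>{a,b,c,d,e}. insert xx (nb V xx) \<inter> {b,d} \<noteq> {}" using dt by (simp add: n)
  have h6: "card {b,c,d} + card {b,d} \<le> card {a,b,c,d,e}" using dt by (auto simp: card_insert_if)
  show ?thesis
    by (rule component[OF h1 h2 fin gd _ _ h3 h4 h5 h6]) auto
qed

lemma comp_P7:
  assumes fin: "finite V" and dd: "distinct [a,b,c,d,e,f,g]" and aV: "a \<in> V"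
    and n: "nb V a = {b}" "nb V b = {a,c}" "nb V c = {b,d}" "nb V d = {c,e}" "nb V e = {d,f}" "nb V f = {e,g}" "nb V g = {f}"
    and gd: "good (V - {a,b,c,d,e,f,g})"
  shows "good V"
proof -
  have V: "b \<in> V" "c \<in> V" "d \<in> V" "e \<in> V" "f \<in> V" "g \<in> V"
    using nbE[OF n(1), of b] nbE[OF n(2), of c] nbE[OF n(3), of d] nbE[OF n(4), of e] nbE[OF n(5), of f] nbE[OF n(6), of g] by simp_all
  note dt = dd[simplified]
  have t: "insert a (nb V a) \<inter> {a,c,e,g} = {a}"
    "insert b (nb V b) \<inter> {a,c,e,g} = {a,c}"
    "insert c (nb V c) \<inter> {a,c,e,g} = {c}"
    "insert d (nb V d) \<inter> {a,c,e,g} = {c,e}"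
    "insert e (nb V e) \<inter> {a,c,e,g} = {e}"
    "insert f (nb V f) \<inter> {a,c,e,g} = {e,g}"
    "insert g (nb V g) \<inter> {a,c,e,g} = {g}"
    using dt by (auto simp: n)
  have h1: "{a,b,c,d,e,f,g} \<subseteq> V" using aV V by simp
  have h2: "\<forall>xx\<in>{a,b,c,d,e,f,g}. nb V xx \<subseteq> {a,b,c,d,e,f,g}" by (simp add: n)
  have h3: "\<forall>xx\<in>{a,b,c,d,e,f,g}. insert xx (nb V xx) \<inter> {a,c,e,g} \<noteq> {}" by (simp only: ball_simps t) simp
  have h4: "\<forall>xx\<in>{a,b,c,d,e,f,g}. \<forall>yy\<in>{a,b,c,d,e,f,g}. xx \<noteq> yy \<longrightarrow> insert xx (nb V xx) \<inter> {a,c,e,g} \<noteq> insert yy (nb V yy) \<inter> {a,c,e,g}"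
    apply (simp only: ball_simps t)
    using dt by (simp add: set_eq_subset insert_subset) blast
  have h5: "\<forall>xx\<in>{a,b,c,d,e,f,g}. insert xx (nb V xx) \<inter> {b,d,f} \<noteq> {}" using dt by (simp add: n)
  have h6: "card {a,c,e,g} + card {b,d,f} \<le> card {a,b,c,d,e,f,g}" using dt by (auto simp: card_insert_if)
  show ?thesis
    by (rule component[OF h1 h2 fin gd _ _ h3 h4 h5 h6]) auto
qed

lemma comp_S123:
  assumes fin: "finite V" and dd: "distinct [z,a,c,d,w,v,l]" and aV: "z \<in> V"
    and n: "nb V z = {a,c,w}" "nb V a = {z}" "nb V c = {z,d}" "nb V d = {c}" "nb V w = {z,v}" "nb V v = {w,l}" "nb V l = {v}"
    and gd: "good (V - {z,a,c,d,w,v,l})"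
  shows "good V"
proof -
  have V: "a \<in> V" "c \<in> V" "d \<in> V" "w \<in> V" "v \<in> V" "l \<in> V"
    using nbE[OF n(1), of a] nbE[OF n(1), of c] nbE[OF n(3), of d] nbE[OF n(1), of w] nbE[OF n(5), of v] nbE[OF n(6), of l] by simp_all
  note dt = dd[simplified]
  have t: "insert z (nb V z) \<inter> {z,c,w,v} = {z,c,w}"
    "insert a (nb V a) \<inter> {z,c,w,v} = {z}"
    "insert c (nb V c) \<inter> {z,c,w,v} = {z,c}"
    "insert d (nb V d) \<inter> {z,c,w,v} = {c}"
    "insert w (nb V w) \<inter> {z,c,w,v} = {z,w,v}"
    "insert v (nb V v) \<inter> {z,c,w,v} = {w,v}"
    "insert l (nb V l) \<inter> {z,c,w,v} = {v}"
    using dt by (auto simp: n)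
  have h1: "{z,a,c,d,w,v,l} \<subseteq> V" using aV V by simp
  have h2: "\<forall>xx\<in>{z,a,c,d,w,v,l}. nb V xx \<subseteq> {z,a,c,d,w,v,l}" by (simp add: n)
  have h3: "\<forall>xx\<in>{z,a,c,d,w,v,l}. insert xx (nb V xx) \<inter> {z,c,w,v} \<noteq> {}" by (simp only: ball_simps t) simp
  have h4: "\<forall>xx\<in>{z,a,c,d,w,v,l}. \<forall>yy\<in>{z,a,c,d,w,v,l}. xx \<noteq> yy \<longrightarrow> insert xx (nb V xx) \<inter> {z,c,w,v} \<noteq> insert yy (nb V yy) \<inter> {z,c,w,v}"
    apply (simp only: ball_simps t)
    using dt by (simp add: set_eq_subset insert_subset) blast
  have h5: "\<forall>xx\<in>{z,a,c,d,w,v,l}. insert xx (nb V xx) \<inter> {z,c,v} \<noteq> {}" using dt by (simp add: n)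
  have h6: "card {z,c,w,v} + card {z,c,v} \<le> card {z,a,c,d,w,v,l}" using dt by (auto simp: card_insert_if)
  show ?thesis
    by (rule component[OF h1 h2 fin gd _ _ h3 h4 h5 h6]) auto
qed
end


context sg begin

lemma valid_remove_closed:
  assumes val: "valid V" and closed: "\<forall>x\<in>X. nb V x \<subseteq> X"
  shows "valid (V - X)"
proof -
  have same: "nb (V - X) u = nb V u" if "u \<in> V - X" for u
  proof -
    have "nb V u \<inter> X = {}" using that closed nb_sym by blast
    then show ?thesis by (auto simp: nb_diff)
  qed
  have inV: "u \<in> V - X" if "u \<in> nb (V - X) x" for u x using that by (auto simp: nb_def)
  show ?thesis
    unfolding valid_def
  proof (intro conjI)
    show "\<forall>x\<in>V - X. nb (V - X) x \<noteq> {}" using val same unfolding valid_def by auto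
  next
    show "\<not> (\<exists>u\<in>V - X. \<exists>v. nb (V - X) u = {v} \<and> nb (V - X) v = {u})"
    proof
      assume "\<exists>u\<in>V - X. \<exists>v. nb (V - X) u = {v} \<and> nb (V - X) v = {u}"
      then obtain u v where u: "u \<in> V - X" and uv: "nb (V - X) u = {v}" "nb (V - X) v = {u}" by blast
      have "v \<in> V - X" using uv inV by blast
      then show False using val u uv same unfolding valid_def by auto
    qed
  next
    show "\<not> (\<exists>a\<in>V - X. \<exists>b c d. distinct [a,b,c,d] \<and> nb (V - X) a = {b} \<and> nb (V - X) b = {a,c} \<and> nb (V - X) c = {b,d} \<and> nb (V - X) d = {c})"
    proof
      assume "\<exists>a\<in>V - X. \<exists>b c d. distinct [a,b,c,d] \<and> nb (V - X) a = {b} \<and> nb (V - X) b = {a,c} \<and> nb (V - X) c = {b,d} \<and> nb (V - X) d = {c}"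
      then obtain a b c d where a: "a \<in> V - X" and dd: "distinct [a,b,c,d]" and
        n: "nb (V - X) a = {b}" "nb (V - X) b = {a,c}" "nb (V - X) c = {b,d}" "nb (V - X) d = {c}" by blast
      have "b \<in> V - X" "c \<in> V - X" "d \<in> V - X" using n inV by blast+
      then show False using val a dd n same unfolding valid_def by (metis DiffD1)
    qed
  qed
qed

lemma good_empty: "good {}"
  unfolding good_def identifying_code_def dominating_set_def by auto

lemma IH_closed:
  assumes val: "valid V" and IH: "\<And>W. W \<subset> V \<Longrightarrow> valid W \<Longrightarrow> good W"
    and XV: "X \<subseteq> V" and Xne: "X \<noteq> {}" and closed: "\<forall>x\<in>X. nb V x \<subseteq> X"
  shows "good (V - X)"
  using IH[of "V - X"] valid_remove_closed[OF val closed] XV Xne by blast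

lemma attach_P2:
  assumes fin: "finite V" and wV: "w \<in> V" and vV: "v \<in> V" and lV: "l \<in> V"
    and nv: "nb V v = {w,l}" and nl: "nb V l = {v}" and lw: "l \<noteq> w"
    and C': "identifying_code (V - {v,l}) E C'" and D': "dominating_set (V - {v,l}) E D'"
    and cd: "card C' + card D' \<le> card (V - {v,l})" and wC: "w \<in> C'"
  shows "good V"
proof -
  have vl: "v \<noteq> l" using nb_ne[of v V l] nl by auto
  have vw: "v \<noteq> w" using nb_ne[of w V v] nv by auto
  have C'sub: "C' \<subseteq> V - {v,l}" using C' by (simp add: identifying_code_def)
  then have vC: "v \<notin> C'" and lC: "l \<notin> C'" by auto
  have lnw: "l \<notin> nb V w"
  proof
    assume "l \<in> nb V w" then have "w \<in> nb V l" using nb_sym wV by blast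
    then show False using nl vw by auto
  qed
  have t1: "tr V (C' \<union> {l}) l = {l}" using vC by (auto simp: tr_def cn_eq[OF lV] nl)
  have t2: "tr V (C' \<union> {l}) v = {w, l}" using vC wC by (auto simp: tr_def cn_eq[OF vV] nv)
  have t3: "l \<notin> tr V (C' \<union> {l}) w" using lnw lw by (auto simp: tr_def cn_eq[OF wV])
  show ?thesis
  proof (rule attach[where X="{v,l}" and s=w and A="{l}" and B="{v}", OF _ _ _ C' D' cd _ _ _ _ _ _ fin])
    show "{v, l} \<subseteq> V" using vV lV by simp
    show "w \<in> V - {v, l}" using wV vw lw by simp
    show "\<forall>u\<in>V - {v, l}. u \<noteq> w \<longrightarrow> nb V u \<inter> {v, l} = {}"
    proof (intro ballI impI)
      fix u assume u: "u \<in> V - {v,l}" "u \<noteq> w"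
      have "v \<notin> nb V u"
      proof
        assume "v \<in> nb V u" then have "u \<in> nb V v" using nb_sym u by blast
        then show False using nv u by auto
      qed
      moreover have "l \<notin> nb V u"
      proof
        assume "l \<in> nb V u" then have "u \<in> nb V l" using nb_sym u by blast
        then show False using nl u by auto
      qed
      ultimately show "nb V u \<inter> {v, l} = {}" by auto
    qed
    show "{l} \<subseteq> {v, l}" by simp
    show "{v} \<subseteq> V" using vV by simp
    show "\<forall>x\<in>{v, l}. tr V (C' \<union> {l}) x \<inter> {v, l} \<noteq> {}" using t1 t2 by auto
    show "\<forall>x\<in>{v, l}. \<forall>u\<in>insert w {v, l}. u \<noteq> x \<longrightarrow> tr V (C' \<union> {l}) x \<noteq> tr V (C' \<union> {l}) u"
      using t1 t2 t3 lw vw vl by auto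
    show "\<forall>x\<in>{v, l}. closed_nbhd V E x \<inter> (D' \<union> {v}) \<noteq> {}"
      using vV lV by (auto simp: cn_eq nl)
    show "card {l} + card {v} \<le> card {v, l}" using vl by simp
  qed
qed

end


context sg begin

lemma nb_split: "x \<in> V \<Longrightarrow> nb V v = nb (V - X) v \<union> (nb V v \<inter> X)"
  by (auto simp: nb_def)

lemma case_R2:
  assumes fin: "finite V" and val: "valid V" and IH: "\<And>W. W \<subset> V \<Longrightarrow> valid W \<Longrightarrow> good W"
    and vV: "v \<in> V" and l1V: "l1 \<in> V" and l2V: "l2 \<in> V" and l12: "l1 \<noteq> l2"
    and n1: "nb V l1 = {v}" and n2: "nb V l2 = {v}"
  shows "good V"
proof -
  have E1: "l1 \<in> nb V v" using nb_sym[of v V l1] n1 l1V by auto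
  have E2: "l2 \<in> nb V v" using nb_sym[of v V l2] n2 l2V by auto
  have vl1: "v \<noteq> l1" using nb_ne[of v V l1] n1 by auto
  have vl2: "v \<noteq> l2" using nb_ne[of v V l2] n2 by auto
  show ?thesis
  proof (cases "nb V v = {l1, l2}")
    case True
    have cl: "\<forall>x\<in>{v,l1,l2}. nb V x \<subseteq> {v,l1,l2}" by (simp add: True n1 n2)
    show ?thesis
      by (rule comp_P3[OF fin _ vV True n1 n2 IH_closed[OF val IH _ _ cl]])
        (use vl1 vl2 l12 vV l1V l2V in auto)
  next
    case nP3: False
    have att: "\<forall>u\<in>V - {l1}. u \<noteq> v \<longrightarrow> nb V u \<inter> {l1} = {}"
    proof (intro ballI impI)
      fix u assume u: "u \<in> V - {l1}" "u \<noteq> v"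
      show "nb V u \<inter> {l1} = {}"
      proof (rule ccontr)
        assume "nb V u \<inter> {l1} \<noteq> {}"
        then have "l1 \<in> nb V u" by auto
        then have "u \<in> nb V l1" using nb_sym u by blast
        then show False using n1 u by auto
      qed
    qed
    show ?thesis
    proof (cases "valid (V - {l1})")
      case True
      have lt: "V - {l1} \<subset> V" using l1V by auto
      obtain C' D' where C': "identifying_code (V - {l1}) E C'" and D': "dominating_set (V - {l1}) E D'"
        and cd: "card C' + card D' \<le> card (V - {l1})" using IH[OF lt True] unfolding good_def by blast
      define D'' where "D'' = insert v (D' - {l2})"
      have l2V': "l2 \<in> V - {l1}" and vV': "v \<in> V - {l1}" using l2V l12 vV vl1 by auto
      have cnl2: "closed_nbhd (V - {l1}) E l2 = {l2, v}"
        using l2V' vl1 by (auto simp: cn_eq nb_diff n2)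
      have D'l2: "{l2, v} \<inter> D' \<noteq> {}" using D' l2V' cnl2 unfolding dominating_set_def by metis
      have D''dom: "dominating_set (V - {l1}) E D''"
        unfolding dominating_set_def
      proof (intro conjI ballI)
        show "D'' \<subseteq> V - {l1}" using D' vV' unfolding D''_def dominating_set_def by auto
      next
        fix x assume x: "x \<in> V - {l1}"
        then obtain y where y: "y \<in> closed_nbhd (V - {l1}) E x" "y \<in> D'"
          using D' unfolding dominating_set_def by blast
        show "closed_nbhd (V - {l1}) E x \<inter> D'' \<noteq> {}"
        proof (cases "y = l2")
          case False then show ?thesis using y unfolding D''_def by auto
        next
          case True
          then have "x = l2 \<or> E l2 x" using y symE by (auto simp: closed_nbhd_def)
          then have "x = l2 \<or> x = v" using n2 x by (auto simp: nb_def)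
          then have "v \<in> closed_nbhd (V - {l1}) E x" using cnl2 x by (auto simp: closed_nbhd_def)
          then show ?thesis unfolding D''_def by auto
        qed
      qed
      have finD': "finite D'" using D' fin finite_subset unfolding dominating_set_def by (metis finite_Diff)
      have cD'': "card D'' \<le> card D'"
      proof (cases "v \<in> D'")
        case True
        then have "D'' \<subseteq> D'" unfolding D''_def by auto
        then show ?thesis using card_mono finD' by blast
      next
        case False
        then have "l2 \<in> D'" using D'l2 by auto
        have "card D'' \<le> Suc (card (D' - {l2}))" unfolding D''_def using finD' by (simp add: card_insert_if)
        moreover have "card (D' - {l2}) = card D' - 1" using \<open>l2 \<in> D'\<close> by simp
        moreover have "card D' \<ge> 1" using \<open>l2 \<in> D'\<close> finD' by (metis One_nat_def Suc_leI card_gt_0_iff empty_iff)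
        ultimately show ?thesis by linarith
      qed
      have C'sub: "C' \<subseteq> V - {l1}" using C' by (simp add: identifying_code_def)
      have t1: "tr V (C' \<union> {l1}) l1 = insert l1 ({v} \<inter> C')"
        using l1V by (auto simp: tr_def cn_eq n1)
      have distv: "tr V (C' \<union> {l1}) l1 \<noteq> tr V (C' \<union> {l1}) v"
      proof
        assume eq: "tr V (C' \<union> {l1}) l1 = tr V (C' \<union> {l1}) v"
        have sub: "closed_nbhd (V - {l1}) E v \<inter> C' \<subseteq> {v}"
        proof
          fix y assume y: "y \<in> closed_nbhd (V - {l1}) E v \<inter> C'"
          then have "y \<in> tr V (C' \<union> {l1}) v" by (auto simp: tr_def closed_nbhd_def)
          then have "y \<in> insert l1 ({v} \<inter> C')" using eq t1 by simp
          moreover have "y \<noteq> l1" using y by (auto simp: closed_nbhd_def)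
          ultimately show "y \<in> {v}" by auto
        qed
        have "l2 \<in> closed_nbhd (V - {l1}) E v" using E2 l2V' by (auto simp: closed_nbhd_def nb_def)
        then have l2C: "l2 \<notin> C'" using sub vl2 by auto
        have "closed_nbhd (V - {l1}) E l2 \<inter> C' = closed_nbhd (V - {l1}) E v \<inter> C'"
        proof -
          have "closed_nbhd (V - {l1}) E l2 \<inter> C' = {v} \<inter> C'" using cnl2 l2C by auto
          moreover have "closed_nbhd (V - {l1}) E v \<inter> C' = {v} \<inter> C'"
            using sub vV' by (auto simp: closed_nbhd_def)
          ultimately show ?thesis by simp
        qed
        then show False using C' l2V' vV' vl2 unfolding identifying_code_def by metis
      qed
      show ?thesis
      proof (rule attach[where X="{l1}" and s=v and A="{l1}" and B="{}", OF _ _ att C' D''dom _ _ _ _ _ _ _ fin])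
        show "{l1} \<subseteq> V" using l1V by simp
        show "v \<in> V - {l1}" using vV' .
        show "card C' + card D'' \<le> card (V - {l1})" using cd cD'' by linarith
        show "{l1} \<subseteq> {l1}" by simp
        show "{} \<subseteq> V" by simp
        show "\<forall>x\<in>{l1}. tr V (C' \<union> {l1}) x \<inter> {l1} \<noteq> {}" using t1 by simp
        show "\<forall>x\<in>{l1}. \<forall>u\<in>insert v {l1}. u \<noteq> x \<longrightarrow> tr V (C' \<union> {l1}) x \<noteq> tr V (C' \<union> {l1}) u"
          using distv by auto
        show "\<forall>x\<in>{l1}. closed_nbhd V E x \<inter> (D'' \<union> {}) \<noteq> {}"
          using l1V by (auto simp: cn_eq n1 D''_def)
        show "card {l1} + card {} \<le> card {l1}" by simp
      qed
    next
      case False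
      have sne: "nb (V - {l1}) v \<noteq> {}" using E2 l12 by (auto simp: nb_diff)
      from removal_violation[OF val _ _ att sne False] l1V vV vl1
      consider (k2) y where "nb (V - {l1}) v = {y}" "nb V y = {v}" "y \<noteq> v" "y \<in> V - {l1}"
        | (pa) b c d where "distinct [v,b,c,d]" "nb (V - {l1}) v = {b}" "nb V b = {v,c}" "nb V c = {b,d}"
            "nb V d = {c}" "b \<in> V - {l1}" "c \<in> V - {l1}" "d \<in> V - {l1}"
        | (pb) a c d where "distinct [a,v,c,d]" "nb V a = {v}" "nb (V - {l1}) v = {a,c}" "nb V c = {v,d}"
            "nb V d = {c}" "a \<in> V - {l1}" "c \<in> V - {l1}" "d \<in> V - {l1}"
        by auto
      then show ?thesis
      proof cases
        case k2
        have "l2 \<in> nb (V - {l1}) v" using E2 l12 by (simp add: nb_diff)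
        then have "y = l2" using k2 by simp
        have "nb V v = nb (V - {l1}) v \<union> (nb V v \<inter> {l1})" using nb_split vV by blast
        also have "\<dots> = {l2, l1}" using k2 \<open>y = l2\<close> E1 by auto
        finally show ?thesis using nP3 by (simp add: insert_commute)
      next
        case pa
        have "l2 \<in> nb (V - {l1}) v" using E2 l12 by (simp add: nb_diff)
        then have "b = l2" using pa by simp
        then have "{v, c} = {v}" using pa n2 by simp
        then show ?thesis using pa by auto
      next
        case pb
        have "l2 \<in> nb (V - {l1}) v" using E2 l12 by (simp add: nb_diff)
        then have "l2 = a \<or> l2 = c" using pb by simp
        moreover have "l2 \<noteq> c"
        proof
          assume "l2 = c" then have "{v, d} = {v}" using pb n2 by simp
          then show False using pb by auto
        qed
        ultimately have a: "a = l2" by simp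
        have nv: "nb V v = {l1, l2, c}"
        proof -
          have "nb V v = nb (V - {l1}) v \<union> (nb V v \<inter> {l1})" using nb_split vV by blast
          also have "\<dots> = {l1, l2, c}" using pb a E1 by auto
          finally show ?thesis .
        qed
        have cl: "\<forall>x\<in>{v,l1,l2,c,d}. nb V x \<subseteq> {v,l1,l2,c,d}"
          using nv n1 n2 pb a by auto
        have dd: "distinct [v,l1,l2,c,d]" using pb a vl1 l12 by auto
        show ?thesis
          by (rule comp_S112[OF fin dd vV nv n1 n2 _ _ IH_closed[OF val IH _ _ cl]])
            (use pb a vV l1V l2V in auto)
      qed
    qed
  qed
qed

end


context sg begin

lemma tr_split:
  assumes "z \<in> V - X" "A \<subseteq> X" "C' \<subseteq> V - X"
  shows "tr V (C' \<union> A) z = (closed_nbhd (V - X) E z \<inter> C') \<union> (nb V z \<inter> A)"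
  using assms by (auto simp: tr_def closed_nbhd_def nb_def)

lemma nbr_of: "nb V x = S \<Longrightarrow> y \<in> S \<Longrightarrow> x \<in> V \<Longrightarrow> x \<in> nb V y"
  using nb_sym by blast

lemma case_C1:
  assumes fin: "finite V" and val: "valid V" and IH: "\<And>W. W \<subset> V \<Longrightarrow> valid W \<Longrightarrow> good W"
    and wV: "w \<in> V" and v1V: "v1 \<in> V" and v2V: "v2 \<in> V" and l1V: "l1 \<in> V" and l2V: "l2 \<in> V"
    and v12: "v1 \<noteq> v2"
    and nv1: "nb V v1 = {w, l1}" and nl1: "nb V l1 = {v1}"
    and nv2: "nb V v2 = {w, l2}" and nl2: "nb V l2 = {v2}"
    and l1w: "l1 \<noteq> w" and l2w: "l2 \<noteq> w"
  shows "good V"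
proof -
  have v1w: "v1 \<noteq> w" using nb_ne[of w V v1] nv1 by auto
  have v2w: "v2 \<noteq> w" using nb_ne[of w V v2] nv2 by auto
  have v1l1: "v1 \<noteq> l1" using nb_ne[of v1 V l1] nl1 by auto
  have v2l2: "v2 \<noteq> l2" using nb_ne[of v2 V l2] nl2 by auto
  have l12: "l1 \<noteq> l2" using nl1 nl2 v12 by auto
  have v1l2: "v1 \<noteq> l2" using nv1 nl2 v2w by (metis insertI1 singletonD)
  have v2l1: "v2 \<noteq> l1" using nv2 nl1 v1w by (metis insertI1 singletonD)
  have w_v1: "v1 \<in> nb V w" using nbr_of[OF nv1 _ v1V] by simp
  have w_l1: "l1 \<notin> nb V w"
  proof
    assume "l1 \<in> nb V w" then have "w \<in> nb V l1" using nb_sym wV by blast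
    then show False using nl1 v1w by auto
  qed
  let ?X = "{v1, l1}"
  have att: "\<forall>u\<in>V - ?X. u \<noteq> w \<longrightarrow> nb V u \<inter> ?X = {}"
  proof (intro ballI impI)
    fix u assume u: "u \<in> V - ?X" "u \<noteq> w"
    have "v1 \<notin> nb V u"
    proof
      assume "v1 \<in> nb V u" then have "u \<in> nb V v1" using nb_sym u by blast
      then show False using nv1 u by auto
    qed
    moreover have "l1 \<notin> nb V u"
    proof
      assume "l1 \<in> nb V u" then have "u \<in> nb V l1" using nb_sym u by blast
      then show False using nl1 u by auto
    qed
    ultimately show "nb V u \<inter> ?X = {}" by auto
  qed
  show ?thesis
  proof (cases "valid (V - ?X)")
    case True
    have lt: "V - ?X \<subset> V" using v1V by auto
    obtain C' D' where C': "identifying_code (V - ?X) E C'" and D': "dominating_set (V - ?X) E D'"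
      and cd: "card C' + card D' \<le> card (V - ?X)" using IH[OF lt True] unfolding good_def by blast
    have "w \<in> C'"
      by (rule key_in_code[OF C', of v2 l2])
        (use v2V l2V v12 v2l1 l12 v1l2 nv2 nl2 v1w l1w l2w in \<open>auto simp: nb_diff\<close>)
    then show ?thesis using attach_P2[OF fin wV v1V l1V nv1 nl1 l1w C' D' cd] by simp
  next
    case False
    have sne: "nb (V - ?X) w \<noteq> {}" using nbr_of[OF nv2 _ v2V] v12 v2l1 by (auto simp: nb_diff)
    have v2in: "v2 \<in> nb (V - ?X) w" using nbr_of[OF nv2 _ v2V] v12 v2l1 by (auto simp: nb_diff)
    from removal_violation[OF val _ _ att sne False] v1V l1V wV v1w l1w
    consider (k2) y where "nb (V - ?X) w = {y}" "nb V y = {w}" "y \<noteq> w" "y \<in> V - ?X"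
      | (pa) b c d where "distinct [w,b,c,d]" "nb (V - ?X) w = {b}" "nb V b = {w,c}" "nb V c = {b,d}"
          "nb V d = {c}" "b \<in> V - ?X" "c \<in> V - ?X" "d \<in> V - ?X"
      | (pb) a c d where "distinct [a,w,c,d]" "nb V a = {w}" "nb (V - ?X) w = {a,c}" "nb V c = {w,d}"
          "nb V d = {c}" "a \<in> V - ?X" "c \<in> V - ?X" "d \<in> V - ?X"
      by auto
    then show ?thesis
    proof cases
      case k2
      then have "y = v2" using v2in by simp
      then show ?thesis using k2 nv2 l2w by auto
    next
      case pa
      then have b: "b = v2" using v2in by simp
      then have "{w, l2} = {w, c}" using pa nv2 by simp
      then have c: "c = l2" using pa by (auto simp: doubleton_eq_iff)
      then have "{v2} = {b, d}" using pa nl2 by simp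
      then show ?thesis using pa b by auto
    next
      case pb
      then have "v2 = a \<or> v2 = c" using v2in by simp
      moreover have "v2 \<noteq> a" using pb nv2 l2w by auto
      ultimately have c: "c = v2" by simp
      then have "{w, l2} = {w, d}" using pb nv2 by simp
      then have d: "d = l2" using pb by (auto simp: doubleton_eq_iff)
      have nw: "nb V w = {a, v1, v2}"
      proof -
        have "nb V w = nb (V - ?X) w \<union> (nb V w \<inter> ?X)" using nb_split wV by blast
        also have "\<dots> = {a, v1, v2}" using pb c w_v1 w_l1 by auto
        finally show ?thesis .
      qed
      have cl: "\<forall>x\<in>{w,a,v1,l1,v2,l2}. nb V x \<subseteq> {w,a,v1,l1,v2,l2}"
        using nw pb nv1 nl1 nv2 nl2 by auto
      have dd: "distinct [w,a,v1,l1,v2,l2]"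
        using pb c d v1w l1w v1l1 v12 v2l1 l12 by auto
      show ?thesis
        by (rule comp_S122[OF fin dd wV nw pb(2) nv1 nl1 nv2 nl2 IH_closed[OF val IH _ _ cl]])
          (use pb wV v1V l1V v2V l2V in auto)
    qed
  qed
qed

lemma case_C2a:
  assumes fin: "finite V" and val: "valid V" and IH: "\<And>W. W \<subset> V \<Longrightarrow> valid W \<Longrightarrow> good W"
    and wV: "w \<in> V" and vV: "v \<in> V" and lV: "l \<in> V" and zV: "z \<in> V"
    and nw: "nb V w = {v, z}" and nv: "nb V v = {w, l}" and nl: "nb V l = {v}"
    and lw: "l \<noteq> w" and vz: "v \<noteq> z" and zy: "\<exists>y\<in>nb V z. y \<noteq> w"
  shows "good V"
proof -
  have vw: "v \<noteq> w" using nb_ne[of w V v] nv by auto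
  have wz: "w \<noteq> z" using nb_ne[of z V w] nw by auto
  have vl: "v \<noteq> l" using nb_ne[of v V l] nl by auto
  have zw: "w \<in> nb V z" using nbr_of[OF nw _ wV] by simp
  have lz: "l \<noteq> z"
  proof
    assume "l = z" then have "w \<in> nb V l" using zw by simp
    then show False using nl vw by auto
  qed
  have vnz: "v \<notin> nb V z"
  proof
    assume "v \<in> nb V z" then have "z \<in> nb V v" using nb_sym zV by blast
    then show False using nv wz lz by auto
  qed
  have lnz: "l \<notin> nb V z"
  proof
    assume "l \<in> nb V z" then have "z \<in> nb V l" using nb_sym zV by blast
    then show False using nl vz by auto
  qed
  let ?X = "{w, v, l}"
  have att: "\<forall>u\<in>V - ?X. u \<noteq> z \<longrightarrow> nb V u \<inter> ?X = {}"
  proof (intro ballI impI)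
    fix u assume u: "u \<in> V - ?X" "u \<noteq> z"
    have "w \<notin> nb V u"
    proof
      assume "w \<in> nb V u" then have "u \<in> nb V w" using nb_sym u by blast
      then show False using nw u by auto
    qed
    moreover have "v \<notin> nb V u"
    proof
      assume "v \<in> nb V u" then have "u \<in> nb V v" using nb_sym u by blast
      then show False using nv u by auto
    qed
    moreover have "l \<notin> nb V u"
    proof
      assume "l \<in> nb V u" then have "u \<in> nb V l" using nb_sym u by blast
      then show False using nl u by auto
    qed
    ultimately show "nb V u \<inter> ?X = {}" by auto
  qed
  have zX: "z \<in> V - ?X" using zV wz vz lz by auto
  have nzX: "nb V z \<inter> ?X = {w}" using zw vnz lnz by auto
  show ?thesis
  proof (cases "valid (V - ?X)")
    case True
    have lt: "V - ?X \<subset> V" using wV by auto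
    obtain C' D' where C': "identifying_code (V - ?X) E C'" and D': "dominating_set (V - ?X) E D'"
      and cd: "card C' + card D' \<le> card (V - ?X)" using IH[OF lt True] unfolding good_def by blast
    have C'sub: "C' \<subseteq> V - ?X" using C' by (simp add: identifying_code_def)
    then have wC: "w \<notin> C'" and vC: "v \<notin> C'" and lC: "l \<notin> C'" by auto
    have trz': "closed_nbhd (V - ?X) E z \<inter> C' \<noteq> {}" using C' zX by (simp add: identifying_code_def)
    have trz'sub: "closed_nbhd (V - ?X) E z \<inter> C' \<subseteq> V - ?X" using C'sub by auto
    have domX: "\<forall>x\<in>?X. closed_nbhd V E x \<inter> (D' \<union> {v}) \<noteq> {}"
      using wV vV lV by (auto simp: cn_eq nw nv nl)
    show ?thesis
    proof (cases "z \<in> C' \<and> closed_nbhd (V - ?X) E z \<inter> C' = {z}")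
      case True
      let ?A = "{v, w}"
      have t1: "tr V (C' \<union> ?A) l = {v}" using lC vl lw by (auto simp: tr_def cn_eq[OF lV] nl)
      have t2: "tr V (C' \<union> ?A) v = {v, w}" using lC vl by (auto simp: tr_def cn_eq[OF vV] nv)
      have t3: "tr V (C' \<union> ?A) w = {w, v, z}" using True by (auto simp: tr_def cn_eq[OF wV] nw)
      have t4: "tr V (C' \<union> ?A) z = {z, w}"
        using tr_split[OF zX _ C'sub, of ?A] True nzX by auto
      show ?thesis
      proof (rule attach[where X="?X" and s=z and A="?A" and B="{v}", OF _ zX att C' D' cd _ _ _ _ domX _ fin])
        show "?X \<subseteq> V" using wV vV lV by simp
        show "?A \<subseteq> ?X" by auto
        show "{v} \<subseteq> V" using vV by simp
        show "\<forall>x\<in>?X. tr V (C' \<union> ?A) x \<inter> ?X \<noteq> {}" using t1 t2 t3 by auto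
        show "\<forall>x\<in>?X. \<forall>u\<in>insert z ?X. u \<noteq> x \<longrightarrow> tr V (C' \<union> ?A) x \<noteq> tr V (C' \<union> ?A) u"
          using t1 t2 t3 t4 vw wz vz lz vl lw by (auto simp: doubleton_eq_iff)
        show "card ?A + card {v} \<le> card ?X" using vw vl lw by simp
      qed
    next
      case False
      let ?A = "{l, w}"
      have t1: "tr V (C' \<union> ?A) l = {l}" using vC vl vw by (auto simp: tr_def cn_eq[OF lV] nl)
      have t2: "tr V (C' \<union> ?A) v = {w, l}" using vC vw vl by (auto simp: tr_def cn_eq[OF vV] nv)
      have t3: "tr V (C' \<union> ?A) w = insert w ({z} \<inter> C')" using vC lC lw lz vw vl by (auto simp: tr_def cn_eq[OF wV] nw)
      have t4: "tr V (C' \<union> ?A) z = insert w (closed_nbhd (V - ?X) E z \<inter> C')"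
        using tr_split[OF zX _ C'sub, of ?A] nzX by auto
      have wz_dist: "tr V (C' \<union> ?A) w \<noteq> tr V (C' \<union> ?A) z"
      proof (cases "z \<in> C'")
        case True
        have zin: "z \<in> closed_nbhd (V - ?X) E z \<inter> C'" using True zX by (auto simp: closed_nbhd_def)
        then obtain y where y: "y \<in> closed_nbhd (V - ?X) E z \<inter> C'" "y \<noteq> z" using False True by blast
        then have "y \<noteq> w" using trz'sub by auto
        then show ?thesis using t3 t4 y by auto
      next
        case zC: False
        obtain y where y: "y \<in> closed_nbhd (V - ?X) E z \<inter> C'" using trz' by blast
        then have "y \<noteq> w" using trz'sub by auto
        then show ?thesis using t3 t4 y zC by auto
      qed
      have lnotz: "l \<notin> tr V (C' \<union> ?A) z" using t4 lC lw by (auto simp: closed_nbhd_def)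
      show ?thesis
      proof (rule attach[where X="?X" and s=z and A="?A" and B="{v}", OF _ zX att C' D' cd _ _ _ _ domX _ fin])
        show "?X \<subseteq> V" using wV vV lV by simp
        show "?A \<subseteq> ?X" by auto
        show "{v} \<subseteq> V" using vV by simp
        show "\<forall>x\<in>?X. tr V (C' \<union> ?A) x \<inter> ?X \<noteq> {}" using t1 t2 t3 by auto
        show "\<forall>x\<in>?X. \<forall>u\<in>insert z ?X. u \<noteq> x \<longrightarrow> tr V (C' \<union> ?A) x \<noteq> tr V (C' \<union> ?A) u"
          using t1 t2 t3 wz_dist lnotz vw wz vz lz vl lw by auto
        show "card ?A + card {v} \<le> card ?X" using vw vl lw by simp
      qed
    qed
  next
    case False
    have sne: "nb (V - ?X) z \<noteq> {}"
    proof -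
      obtain y where y: "y \<in> nb V z" "y \<noteq> w" using zy by blast
      then have "y \<noteq> v" "y \<noteq> l" using vnz lnz by auto
      then show ?thesis using y by (auto simp: nb_diff)
    qed
    have nzs: "nb V z = insert w (nb (V - ?X) z)"
    proof -
      have "nb V z = nb (V - ?X) z \<union> (nb V z \<inter> ?X)" using nb_split zV by blast
      then show ?thesis using nzX by auto
    qed
    from removal_violation[OF val _ zX att sne False] wV vV lV
    consider (k2) y where "nb (V - ?X) z = {y}" "nb V y = {z}" "y \<noteq> z" "y \<in> V - ?X"
      | (pa) b c d where "distinct [z,b,c,d]" "nb (V - ?X) z = {b}" "nb V b = {z,c}" "nb V c = {b,d}"
          "nb V d = {c}" "b \<in> V - ?X" "c \<in> V - ?X" "d \<in> V - ?X"
      | (pb) a c d where "distinct [a,z,c,d]" "nb V a = {z}" "nb (V - ?X) z = {a,c}" "nb V c = {z,d}"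
          "nb V d = {c}" "a \<in> V - ?X" "c \<in> V - ?X" "d \<in> V - ?X"
      by auto
    then show ?thesis
    proof cases
      case k2
      have n: "nb V l = {v}" "nb V v = {l, w}" "nb V w = {v, z}" "nb V z = {w, y}" "nb V y = {z}"
        using nl nv nw nzs k2 by (auto simp: insert_commute)
      have cl: "\<forall>x\<in>{l,v,w,z,y}. nb V x \<subseteq> {l,v,w,z,y}" using n by auto
      have dd: "distinct [l,v,w,z,y]" using k2 vl lw lz vw vz wz by auto
      show ?thesis
        by (rule comp_P5[OF fin dd lV n IH_closed[OF val IH _ _ cl]]) (use k2 lV vV wV zV in auto)
    next
      case pa
      have n: "nb V l = {v}" "nb V v = {l, w}" "nb V w = {v, z}" "nb V z = {w, b}" "nb V b = {z,c}"
        "nb V c = {b,d}" "nb V d = {c}"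
        using nl nv nw nzs pa by (auto simp: insert_commute)
      have cl: "\<forall>x\<in>{l,v,w,z,b,c,d}. nb V x \<subseteq> {l,v,w,z,b,c,d}" using n by auto
      have dd: "distinct [l,v,w,z,b,c,d]" using pa vl lw lz vw vz wz by auto
      show ?thesis
        by (rule comp_P7[OF fin dd lV n IH_closed[OF val IH _ _ cl]]) (use pa lV vV wV zV in auto)
    next
      case pb
      have n: "nb V z = {a,c,w}" "nb V a = {z}" "nb V c = {z,d}" "nb V d = {c}"
        "nb V w = {z, v}" "nb V v = {w, l}" "nb V l = {v}"
        using nl nv nw nzs pb by (auto simp: insert_commute)
      have cl: "\<forall>x\<in>{z,a,c,d,w,v,l}. nb V x \<subseteq> {z,a,c,d,w,v,l}" using n by auto
      have dd: "distinct [z,a,c,d,w,v,l]" using pb vl lw lz vw vz wz by auto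
      show ?thesis
        by (rule comp_S123[OF fin dd zV n IH_closed[OF val IH _ _ cl]]) (use pb lV vV wV zV in auto)
    qed
  qed
qed

end


context sg begin

lemma not_adj: "nb V x = S \<Longrightarrow> y \<notin> S \<Longrightarrow> y \<in> V \<Longrightarrow> x \<notin> nb V y"
  using nb_sym by blast

lemma case_C2b:
  assumes fin: "finite V" and val: "valid V" and IH: "\<And>W. W \<subset> V \<Longrightarrow> valid W \<Longrightarrow> good W"
    and wV: "w \<in> V" and hV: "h \<in> V" and vV: "v \<in> V" and lV: "l \<in> V" and zV: "z \<in> V"
    and nw: "nb V w = {h, v, z}" and nh: "nb V h = {w}" and nv: "nb V v = {w, l}" and nl: "nb V l = {v}"
    and lw: "l \<noteq> w" and znl: "\<not> (\<exists>y. nb V z = {y})" and vz: "v \<noteq> z"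
  shows "good V"
proof -
  have vw: "v \<noteq> w" using nb_ne[of w V v] nv by auto
  have hw: "h \<noteq> w" using nb_ne[of w V h] nh by auto
  have wz: "w \<noteq> z" using nb_ne[of z V w] nw by auto
  have vl: "v \<noteq> l" using nb_ne[of v V l] nl by auto
  have hz: "h \<noteq> z" using znl nh by auto
  have hv: "h \<noteq> v" using nh nv lw by auto
  have zw: "w \<in> nb V z" using nbr_of[OF nw _ wV] by simp
  have lz: "l \<noteq> z"
  proof
    assume "l = z" then have "w \<in> nb V l" using zw by simp
    then show False using nl vw by auto
  qed
  have lh: "l \<noteq> h" using nl nh vw by auto
  let ?X = "{v, l}"
  let ?V' = "V - {v, l}"
  have att: "\<forall>u\<in>V - ?X. u \<noteq> w \<longrightarrow> nb V u \<inter> ?X = {}"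
  proof (intro ballI impI)
    fix u assume u: "u \<in> V - ?X" "u \<noteq> w"
    have "v \<notin> nb V u" using not_adj[OF nv, of u] u by auto
    moreover have "l \<notin> nb V u" using not_adj[OF nl, of u] u by auto
    ultimately show "nb V u \<inter> ?X = {}" by auto
  qed
  have nw': "nb ?V' w = {h, z}" using nw hv lh vz lz by (auto simp: nb_diff)
  show ?thesis
  proof (cases "valid ?V'")
    case True
    have lt: "?V' \<subset> V" using vV by auto
    obtain C' D' where C': "identifying_code ?V' E C'" and D': "dominating_set ?V' E D'"
      and cd: "card C' + card D' \<le> card ?V'" using IH[OF lt True] unfolding good_def by blast
    show ?thesis
    proof (cases "w \<in> C'")
      case True
      then show ?thesis using attach_P2[OF fin wV vV lV nv nl lw C' D' cd] by simp
    next
      case wC: False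
      have C'sub: "C' \<subseteq> ?V'" using C' by (simp add: identifying_code_def)
      have D'sub: "D' \<subseteq> ?V'" using D' by (simp add: dominating_set_def)
      have vC: "v \<notin> C'" and lC: "l \<notin> C'" using C'sub by auto
      have hV': "h \<in> ?V'" and wV': "w \<in> ?V'" and zV': "z \<in> ?V'" using hV wV zV hv lh vw lw vz lz by auto
      have cnh': "closed_nbhd ?V' E h = {h, w}" using hV' vw lw by (auto simp: cn_eq nb_diff nh)
      have cnw': "closed_nbhd ?V' E w = {w, h, z}" using wV' nw' by (simp add: cn_eq)
      have hC: "h \<in> C'"
      proof -
        have "closed_nbhd ?V' E h \<inter> C' \<noteq> {}" using C' hV' by (simp add: identifying_code_def)
        then show ?thesis using cnh' wC by auto
      qed
      have zC: "z \<in> C'"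
      proof (rule ccontr)
        assume "z \<notin> C'"
        then have "closed_nbhd ?V' E w \<inter> C' = closed_nbhd ?V' E h \<inter> C'" using cnh' cnw' wC hC by auto
        then show False using C' hV' wV' hw unfolding identifying_code_def by metis
      qed
      define C where "C = insert v (insert w (C' - {h}))"
      define D where "D = insert v D'"
      define T where "T x = closed_nbhd V E x \<inter> C" for x
      have vnz: "v \<notin> nb V z" using not_adj[OF nv, of z] zV wz lz by auto
      have lnz: "l \<notin> nb V z" using not_adj[OF nl, of z] zV vz by auto
      have hnz: "h \<notin> nb V z" using not_adj[OF nh, of z] zV wz by auto
      have th: "T h = {w}" using hV hv hw by (auto simp: T_def C_def cn_eq nh)
      have tw: "T w = {w, v, z}" using wV zC hz vz wz hw hv by (auto simp: T_def C_def cn_eq nw)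
      have tv: "T v = {v, w}" using vV lC vl lw lh by (auto simp: T_def C_def cn_eq nv)
      have tl: "T l = {v}" using lV lC vl lw lh by (auto simp: T_def C_def cn_eq nl)
      define T' where "T' = closed_nbhd ?V' E z \<inter> C'"
      have tz: "T z = insert w T'"
        using zV zV' zw vnz lnz hnz hz wz vz lz vC wC by (auto simp: T_def C_def cn_eq nb_diff T'_def)
      have zT': "z \<in> T'" using zC zV' by (simp add: cn_eq T'_def)
      have T'sub: "T' \<subseteq> ?V'" using C'sub by (auto simp: T'_def)
      let ?S = "{h, w, v, l, z}"
      have gen: "T y = closed_nbhd ?V' E y \<inter> C' \<and> v \<notin> T y \<and> w \<notin> T y" if y: "y \<in> V - ?S" for y
      proof -
        have a1: "v \<notin> nb V y" using not_adj[OF nv, of y] y by auto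
        have a2: "l \<notin> nb V y" using not_adj[OF nl, of y] y by auto
        have a3: "w \<notin> nb V y" using not_adj[OF nw, of y] y by auto
        have a4: "h \<notin> nb V y" using not_adj[OF nh, of y] y by auto
        have yV: "y \<in> V" using y by simp
        show ?thesis using y a1 a2 a3 a4 vC wC by (auto simp: T_def C_def cn_eq[OF yV] cn_eq nb_diff)
      qed
      have Sin: "T x \<inter> {v, w} \<noteq> {}" if "x \<in> ?S" for x
        using that th tw tv tl tz by auto
      have Sdist: "T x \<noteq> T y" if "x \<in> ?S" "y \<in> ?S" "x \<noteq> y" for x y
      proof -
        have "v \<notin> T'" "l \<notin> T'" "w \<notin> T'" using T'sub wC by (auto simp: T'_def)
        note ds = hz wz vz lz vw hw hv vl lw lh hz[symmetric] wz[symmetric] vz[symmetric] lz[symmetric]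
          vw[symmetric] hw[symmetric] hv[symmetric] vl[symmetric] lw[symmetric] lh[symmetric]
        from that show ?thesis
          apply (elim insertE emptyE)
          apply (simp_all only: th tw tv tl tz)
          using zT' \<open>v \<notin> T'\<close> \<open>l \<notin> T'\<close> \<open>w \<notin> T'\<close> ds
          apply (simp_all add: set_eq_subset insert_subset)
          apply blast+
          done
      qed
      have idc: "identifying_code V E C"
        unfolding identifying_code_def
      proof (intro conjI ballI impI)
        show "C \<subseteq> V" using C'sub vV wV by (auto simp: C_def)
      next
        fix x assume x: "x \<in> V"
        show "closed_nbhd V E x \<inter> C \<noteq> {}"
        proof (cases "x \<in> ?S")
          case True then show ?thesis using Sin unfolding T_def by blast
        next
          case False
          then have "T x = closed_nbhd ?V' E x \<inter> C'" using gen x by blast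
          moreover have "closed_nbhd ?V' E x \<inter> C' \<noteq> {}" using C' x False by (simp add: identifying_code_def)
          ultimately show ?thesis unfolding T_def by simp
        qed
      next
        fix x y assume x: "x \<in> V" and y: "y \<in> V" and xy: "x \<noteq> y"
        show "closed_nbhd V E x \<inter> C \<noteq> closed_nbhd V E y \<inter> C"
        proof (cases "x \<in> ?S"; cases "y \<in> ?S")
          assume "x \<in> ?S" "y \<in> ?S" then show ?thesis using Sdist xy unfolding T_def by blast
        next
          assume a: "x \<in> ?S" "y \<notin> ?S"
          then have "T x \<inter> {v, w} \<noteq> {}" "T y \<inter> {v, w} = {}" using Sin gen y by auto
          then show ?thesis unfolding T_def by auto
        next
          assume a: "x \<notin> ?S" "y \<in> ?S"
          then have "T y \<inter> {v, w} \<noteq> {}" "T x \<inter> {v, w} = {}" using Sin gen x by auto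
          then show ?thesis unfolding T_def by auto
        next
          assume a: "x \<notin> ?S" "y \<notin> ?S"
          then have "T x = closed_nbhd ?V' E x \<inter> C'" "T y = closed_nbhd ?V' E y \<inter> C'" using gen x y by auto
          moreover have "closed_nbhd ?V' E x \<inter> C' \<noteq> closed_nbhd ?V' E y \<inter> C'"
            using C' x y a xy by (simp add: identifying_code_def)
          ultimately show ?thesis unfolding T_def by simp
        qed
      qed
      have dsc: "dominating_set V E D"
        unfolding dominating_set_def
      proof (intro conjI ballI)
        show "D \<subseteq> V" using D'sub vV by (auto simp: D_def)
      next
        fix x assume x: "x \<in> V"
        show "closed_nbhd V E x \<inter> D \<noteq> {}"
        proof (cases "x \<in> ?X")
          case True then show ?thesis using vV lV by (auto simp: D_def cn_eq nl)
        next
          case False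
          then have "closed_nbhd ?V' E x \<inter> D' \<noteq> {}" using D' x by (simp add: dominating_set_def)
          then show ?thesis by (auto simp: closed_nbhd_def D_def)
        qed
      qed
      have finC': "finite C'" using fin C'sub finite_subset by blast
      have finD': "finite D'" using fin D'sub finite_subset by blast
      have "card C \<le> Suc (Suc (card (C' - {h})))"
        unfolding C_def using finC' by (simp add: card_insert_if)
      moreover have "card (C' - {h}) = card C' - 1" using hC by simp
      moreover have "card C' \<ge> 1" using hC finC' by (metis One_nat_def Suc_leI card_gt_0_iff empty_iff)
      moreover have "card D \<le> Suc (card D')" unfolding D_def using finD' by (simp add: card_insert_if)
      moreover have "card ?V' = card V - 2" using vV lV vl fin by (simp add: card_Diff_subset)
      moreover have "card V \<ge> 2" using vV lV vl fin
        by (metis card_2_iff card_mono empty_subsetI insert_subset)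
      ultimately have "card C + card D \<le> card V" using cd by linarith
      then show ?thesis using idc dsc unfolding good_def by blast
    qed
  next
    case False
    have sne: "nb ?V' w \<noteq> {}" using nw' by simp
    have wX: "w \<in> V - ?X" using wV vw lw by auto
    from removal_violation[OF val _ wX att sne False] vV lV
    consider (k2) y where "nb ?V' w = {y}" "nb V y = {w}" "y \<noteq> w" "y \<in> V - ?X"
      | (pa) b c d where "distinct [w,b,c,d]" "nb ?V' w = {b}" "nb V b = {w,c}" "nb V c = {b,d}"
          "nb V d = {c}" "b \<in> V - ?X" "c \<in> V - ?X" "d \<in> V - ?X"
      | (pb) a c d where "distinct [a,w,c,d]" "nb V a = {w}" "nb ?V' w = {a,c}" "nb V c = {w,d}"
          "nb V d = {c}" "a \<in> V - ?X" "c \<in> V - ?X" "d \<in> V - ?X"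
      by auto
    then show ?thesis
    proof cases
      case k2
      have "{h, z} = {y}" using k2(1) nw' by simp
      then show ?thesis using hz by auto
    next
      case pa
      have "{h, z} = {b}" using pa(2) nw' by simp
      then show ?thesis using hz by auto
    next
      case pb
      have hzac: "{h, z} = {a, c}" using pb(3) nw' by simp
      have az: "a \<noteq> z"
      proof
        assume "a = z" then have "nb V z = {w}" using pb(2) by simp
        then show False using znl by blast
      qed
      have a: "a = h" and c: "c = z" using hzac az by (auto simp: doubleton_eq_iff)
      have nz: "nb V z = {w, d}" using pb(4) c by simp
      have nd: "nb V d = {z}" using pb(5) c by simp
      have cl: "\<forall>x\<in>{w,h,v,l,z,d}. nb V x \<subseteq> {w,h,v,l,z,d}" by (simp add: nw nh nv nl nz nd)
      have dX: "d \<in> V - ?X" using pb(8) .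
      have dist4: "distinct [a,w,c,d]" using pb(1) .
      have dd: "distinct [w,h,v,l,z,d]"
        using dist4 a c dX hw vw lw wz hv lh hz vl vz lz by auto
      show ?thesis
        by (rule comp_S122[OF fin dd wV nw nh nv nl nz nd IH_closed[OF val IH _ _ cl]])
          (use wV hV vV lV zV dX in auto)
    qed
  qed
qed

end


context sg begin

lemma acyclic_subset: "acyclic_graph V E \<Longrightarrow> W \<subseteq> V \<Longrightarrow> acyclic_graph W E"
  unfolding acyclic_graph_def is_cycle_def by blast

lemma noP4:
  assumes "valid V" "a \<in> V" "distinct [a,b,c,d]" "nb V a = {b}" "nb V b = {a,c}" "nb V c = {b,d}" "nb V d = {c}"
  shows False
  using assms unfolding valid_def by blast

lemma step:
  assumes fin: "finite V" and acy: "acyclic_graph V E" and val: "valid V"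
    and IH: "\<And>W. W \<subset> V \<Longrightarrow> valid W \<Longrightarrow> good W"
  shows "good V"
proof (cases "V = {}")
  case True then show ?thesis using good_empty by simp
next
  case Vne: False
  have nonempty: "nb V x \<noteq> {}" if "x \<in> V" for x using val that unfolding valid_def by blast
  have noK2: "\<not> (nb V u = {v} \<and> nb V v = {u})" if "u \<in> V" for u v using val that unfolding valid_def by blast
  show ?thesis
  proof (cases "\<exists>v l1 l2. l1 \<in> V \<and> l2 \<in> V \<and> l1 \<noteq> l2 \<and> nb V l1 = {v} \<and> nb V l2 = {v}")
    case True
    then obtain v l1 l2 where h: "l1 \<in> V" "l2 \<in> V" "l1 \<noteq> l2" "nb V l1 = {v}" "nb V l2 = {v}" by blast
    have "v \<in> V" using nbE[OF h(4), of v] by simp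
    then show ?thesis using case_R2[OF fin val IH _ h] by simp
  next
    case noR2: False
    define leaf where "leaf x \<longleftrightarrow> (\<exists>y. nb V x = {y})" for x
    define F1 where "F1 = {x \<in> V. \<not> leaf x}"
    define F2 where "F2 = {x \<in> F1. \<not> (\<exists>y. nb F1 x \<subseteq> {y})}"
    have two: "\<exists>p q. p \<in> nb V x \<and> q \<in> nb V x \<and> p \<noteq> q" if xV: "x \<in> V" and xnl: "\<not> leaf x" for x
    proof -
      obtain p where p: "p \<in> nb V x" using nonempty[OF xV] by blast
      have "nb V x \<noteq> {p}" using xnl unfolding leaf_def by blast
      then obtain q where "q \<in> nb V x" "q \<noteq> p" using p by blast
      then show ?thesis using p by blast
    qed
    have leafnb: "nb V y = {x}" if a1: "y \<in> V" and a2: "leaf y" and a3: "y \<in> nb V x" and a4: "x \<in> V" for x y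
    proof -
      obtain t where t: "nb V y = {t}" using a2 unfolding leaf_def by blast
      have "x \<in> nb V y" using nb_sym a3 a4 by blast
      then show ?thesis using t by simp
    qed
    have endsupp: "\<exists>l. nb V u = {w, l} \<and> nb V l = {u} \<and> l \<noteq> w \<and> l \<in> V"
      if u: "u \<in> F1" "u \<notin> F2" and w: "w \<in> F1" "w \<in> nb V u" for u w
    proof -
      have uV: "u \<in> V" and unl: "\<not> leaf u" using u unfolding F1_def by auto
      obtain y where y: "nb F1 u \<subseteq> {y}" using u unfolding F2_def by blast
      have wF1u: "w \<in> nb F1 u" using w by (simp add: nb_def)
      have onlyw: "m \<notin> F1" if "m \<in> nb V u" "m \<noteq> w" for m
      proof
        assume "m \<in> F1" then have "m \<in> nb F1 u" using that by (simp add: nb_def)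
        then show False using y wF1u that(2) by blast
      qed
      have isleaf: "nb V m = {u}" if "m \<in> nb V u" "m \<noteq> w" for m
      proof -
        have mV: "m \<in> V" using that nb_sub by blast
        then have "leaf m" using onlyw[OF that] unfolding F1_def by blast
        then show ?thesis using leafnb[OF mV _ that(1) uV] by blast
      qed
      obtain p q where pq: "p \<in> nb V u" "q \<in> nb V u" "p \<noteq> q" using two[OF uV unl] by blast
      obtain l where l: "l \<in> nb V u" "l \<noteq> w" using pq by blast
      have lV: "l \<in> V" using l nb_sub by blast
      have nl: "nb V l = {u}" using isleaf l by blast
      have "nb V u = {w, l}"
      proof
        show "nb V u \<subseteq> {w, l}"
        proof
          fix m assume m: "m \<in> nb V u"
          show "m \<in> {w, l}"
          proof (rule ccontr)
            assume "m \<notin> {w, l}"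
            then have "nb V m = {u}" "m \<noteq> l" "m \<noteq> w" using isleaf m by auto
            moreover have "m \<in> V" using m nb_sub by blast
            ultimately show False using noR2 lV nl by blast
          qed
        qed
        show "{w, l} \<subseteq> nb V u" using w l by simp
      qed
      then show ?thesis using nl l lV by blast
    qed
    have F1V: "F1 \<subseteq> V" unfolding F1_def by auto
    have F2F1: "F2 \<subseteq> F1" unfolding F2_def by auto
    have F2ne: "F2 \<noteq> {}"
    proof
      assume F2e: "F2 = {}"
      obtain x0 where x0: "x0 \<in> V" using Vne by blast
      have "\<exists>x. x \<in> F1"
      proof (cases "leaf x0")
        case False then show ?thesis using x0 unfolding F1_def by blast
      next
        case True
        then obtain y where y: "nb V x0 = {y}" unfolding leaf_def by blast
        have yV: "y \<in> V" using nbE[OF y, of y] by simp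
        have "x0 \<in> nb V y" using nbr_of[OF y _ x0] by simp
        have "\<not> leaf y"
        proof
          assume "leaf y"
          moreover have "y \<in> nb V x0" using y by simp
          ultimately have "nb V y = {x0}" using leafnb[OF yV _ _ x0] by blast
          then show False using noK2[OF x0] y by blast
        qed
        then show ?thesis using yV unfolding F1_def by blast
      qed
      then obtain x where xF1: "x \<in> F1" by blast
      then have xV: "x \<in> V" and xnl: "\<not> leaf x" unfolding F1_def by auto
      have xnF2: "x \<notin> F2" using F2e by simp
      have "\<exists>y. y \<in> nb V x \<and> y \<in> F1"
      proof (rule ccontr)
        assume "\<nexists>y. y \<in> nb V x \<and> y \<in> F1"
        then have allleaf: "\<forall>y\<in>nb V x. y \<notin> F1" by blast
        obtain p q where pq: "p \<in> nb V x" "q \<in> nb V x" "p \<noteq> q" using two[OF xV xnl] by blast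
        have pV: "p \<in> V" "q \<in> V" using pq nb_sub by blast+
        have "leaf p" "leaf q" using allleaf pq pV unfolding F1_def by auto
        then have "nb V p = {x}" "nb V q = {x}" using leafnb pV pq xV by blast+
        then show False using noR2 pV pq by blast
      qed
      then obtain y where y: "y \<in> nb V x" "y \<in> F1" by blast
      obtain l where l: "nb V x = {y, l}" "nb V l = {x}" "l \<noteq> y" "l \<in> V"
        using endsupp[OF xF1 xnF2 y(2) y(1)] by blast
      have yV: "y \<in> V" using y nb_sub by blast
      have ynF2: "y \<notin> F2" using F2e by simp
      have xy: "x \<in> nb V y" using nb_sym y(1) xV by blast
      obtain l' where l': "nb V y = {x, l'}" "nb V l' = {y}" "l' \<noteq> x" "l' \<in> V"
        using endsupp[OF y(2) ynF2 xF1 xy] by blast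
      have lx: "l \<noteq> x" using nb_ne[of x V l] l(2) by auto
      have xyne: "x \<noteq> y" using nb_ne y(1) by blast
      have ll': "l \<noteq> l'" using l(2) l'(2) xyne by auto
      have xl': "x \<noteq> l'" using l'(3) by simp
      have yl': "y \<noteq> l'" using nb_ne[of y V l'] l'(2) by auto
      have d4: "distinct [l, x, y, l']" using lx l(3) ll' xyne xl' yl' by auto
      have nx: "nb V x = {l, y}" using l(1) by (simp add: insert_commute)
      show False using noP4[OF val l(4) d4 l(2) nx l'(1) l'(2)] .
    qed
    have F2V: "F2 \<subseteq> V" using F2F1 F1V by (rule subset_trans)
    have finF2: "finite F2" using finite_subset[OF F2V fin] .
    have acyF2: "acyclic_graph F2 E" using acyclic_subset[OF acy F2V] .
    obtain w where wF2: "w \<in> F2" and low: "\<forall>y1 y2. y1 \<in> nb F2 w \<longrightarrow> y2 \<in> nb F2 w \<longrightarrow> y1 = y2"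
      using low_degree_vertex[OF finF2 F2ne acyF2] by blast
    have wF1: "w \<in> F1" using wF2 F2F1 by blast
    have wV: "w \<in> V" using wF1 F1V by blast
    have wnot: "\<not> (\<exists>y. nb F1 w \<subseteq> {y})" using wF2 unfolding F2_def by blast
    obtain p where p: "p \<in> nb F1 w" using wnot by blast
    obtain q where q: "q \<in> nb F1 w" "q \<noteq> p" using wnot by blast
    have pq: "p \<in> nb F1 w" "q \<in> nb F1 w" "p \<noteq> q" using p q by auto
    have pqF1: "p \<in> F1" "q \<in> F1" and pqV: "p \<in> nb V w" "q \<in> nb V w" using pq F1V by (auto simp: nb_def)
    have wnb: "w \<in> nb V u" if "u \<in> nb V w" for u using nb_sym that wV by blast
    show ?thesis
    proof (cases "\<exists>v1 v2. v1 \<in> nb V w \<and> v2 \<in> nb V w \<and> v1 \<noteq> v2 \<and> v1 \<in> F1 - F2 \<and> v2 \<in> F1 - F2")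
      case True
      then obtain v1 v2 where v: "v1 \<in> nb V w" "v2 \<in> nb V w" "v1 \<noteq> v2" "v1 \<in> F1" "v1 \<notin> F2" "v2 \<in> F1" "v2 \<notin> F2"
        by blast
      obtain l1 where l1: "nb V v1 = {w, l1}" "nb V l1 = {v1}" "l1 \<noteq> w" "l1 \<in> V"
        using endsupp[OF v(4,5) wF1 wnb[OF v(1)]] by blast
      obtain l2 where l2: "nb V v2 = {w, l2}" "nb V l2 = {v2}" "l2 \<noteq> w" "l2 \<in> V"
        using endsupp[OF v(6,7) wF1 wnb[OF v(2)]] by blast
      have vV: "v1 \<in> V" "v2 \<in> V" using v nb_sub by blast+
      show ?thesis using case_C1[OF fin val IH wV vV l1(4) l2(4) v(3) l1(1,2) l2(1,2) l1(3) l2(3)] .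
    next
      case notC1: False
      have atmost1: "u1 = u2" if "u1 \<in> nb V w" "u2 \<in> nb V w" "u1 \<in> F1 - F2" "u2 \<in> F1 - F2" for u1 u2
        using notC1 that by blast
      have F2nb: "u1 = u2" if "u1 \<in> nb V w" "u2 \<in> nb V w" "u1 \<in> F2" "u2 \<in> F2" for u1 u2
        using low that by (simp add: nb_def)
      obtain v z where vz: "v \<in> nb V w" "z \<in> nb V w" "v \<in> F1 - F2" "z \<in> F2"
      proof -
        consider "p \<in> F2" "q \<in> F2" | "p \<in> F2" "q \<notin> F2" | "p \<notin> F2" "q \<in> F2" | "p \<notin> F2" "q \<notin> F2" by blast
        then show thesis
        proof cases
          case 1 then show ?thesis using F2nb[OF pqV] pq(3) by blast
        next
          case 2 then show ?thesis using that[of q p] pqV pqF1 by blast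
        next
          case 3 then show ?thesis using that[of p q] pqV pqF1 by blast
        next
          case 4 then show ?thesis using atmost1[OF pqV] pqF1 pq(3) by blast
        qed
      qed
      obtain l where l: "nb V v = {w, l}" "nb V l = {v}" "l \<noteq> w" "l \<in> V"
        using endsupp[of v w] vz wF1 wnb[OF vz(1)] by blast
      have vV: "v \<in> V" and zV: "z \<in> V" using vz nb_sub by blast+
      have vzne: "v \<noteq> z" using vz by blast
      have zF1: "z \<in> F1" using vz F2F1 by blast
      have znl: "\<not> leaf z" using zF1 unfolding F1_def by blast
      have others: "nb V u = {w}" if "u \<in> nb V w" "u \<noteq> v" "u \<noteq> z" for u
      proof -
        have uV: "u \<in> V" using that nb_sub by blast
        have "u \<notin> F2" using F2nb[OF that(1) vz(2)] that(3) vz(4) by blast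
        moreover have "u \<notin> F1 - F2" using atmost1[OF that(1) vz(1) _ vz(3)] that(2) by blast
        ultimately have "leaf u" using uV unfolding F1_def by blast
        then show ?thesis using leafnb[OF uV _ that(1) wV] by blast
      qed
      show ?thesis
      proof (cases "\<exists>h\<in>nb V w. h \<noteq> v \<and> h \<noteq> z")
        case True
        then obtain h where h: "h \<in> nb V w" "h \<noteq> v" "h \<noteq> z" by blast
        have nh: "nb V h = {w}" using others h by blast
        have hV: "h \<in> V" using h nb_sub by blast
        have nw: "nb V w = {h, v, z}"
        proof
          show "nb V w \<subseteq> {h, v, z}"
          proof
            fix u assume u: "u \<in> nb V w"
            show "u \<in> {h, v, z}"
            proof (rule ccontr)
              assume "u \<notin> {h, v, z}"
              then have "nb V u = {w}" "u \<noteq> h" using others u by auto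
              moreover have "u \<in> V" using u nb_sub by blast
              ultimately show False using noR2 hV nh by blast
            qed
          qed
          show "{h, v, z} \<subseteq> nb V w" using h vz by simp
        qed
        have znl': "\<not> (\<exists>y. nb V z = {y})" using znl unfolding leaf_def .
        show ?thesis using case_C2b[OF fin val IH wV hV vV l(4) zV nw nh l(1,2,3) znl' vzne] .
      next
        case False
        have nw: "nb V w = {v, z}" using False vz by blast
        obtain p' q' where "p' \<in> nb V z" "q' \<in> nb V z" "p' \<noteq> q'" using two[OF zV znl] by blast
        then have zy: "\<exists>y\<in>nb V z. y \<noteq> w" by (cases "p' = w") auto
        show ?thesis using case_C2a[OF fin val IH wV vV l(4) zV nw l(1,2,3) vzne zy] .
      qed
    qed
  qed
qed

lemma main_good:
  assumes "finite V" "acyclic_graph V E" "valid V"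
  shows "good V"
  using assms
proof (induction "card V" arbitrary: V rule: less_induct)
  case less
  show ?case
  proof (rule step[OF less.prems])
    fix W assume W: "W \<subset> V" "valid W"
    have "card W < card V" using W(1) less.prems(1) by (simp add: psubset_card_mono)
    moreover have "finite W" using W(1) less.prems(1) finite_subset by blast
    moreover have "acyclic_graph W E" using acyclic_subset[OF less.prems(2)] W(1) by blast
    ultimately show "good W" using less.hyps W(2) by blast
  qed
qed

end



lemma closed_all:
  assumes sg: "simple_graph V E" and conn: "connected_graph V E"
    and xX: "x \<in> X" and XV: "X \<subseteq> V" and cl: "\<forall>u\<in>X. \<forall>y. E u y \<longrightarrow> y \<in> X"
  shows "V \<subseteq> X"
proof
  fix y assume y: "y \<in> V"
  have "E\<^sup>*\<^sup>* x y" using conn xX XV y unfolding connected_graph_def by blast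
  then show "y \<in> X"
  proof (induction rule: rtranclp_induct)
    case base then show ?case using xX .
  next
    case (step a b) then show ?case using cl by blast
  qed
qed

theorem mainTheorem2:
  fixes V :: "'a set" and E :: "'a \<Rightarrow> 'a \<Rightarrow> bool"
  assumes "is_tree V E"
    and "card V \<ge> 3"
    and "\<not> graph_iso V E (path_vertices 4) (path_edges 4)"
  shows "id_code_number V E \<le> enat (card V - domination_number V E)"
proof -
  have sg: "simple_graph V E" and conn: "connected_graph V E" and acy: "acyclic_graph V E"
    using assms(1) unfolding is_tree_def by auto
  have fin: "finite V" using sg unfolding simple_graph_def by blast
  have EV: "E u v \<Longrightarrow> u \<in> V \<and> v \<in> V \<and> u \<noteq> v \<and> E v u" for u v
    using sg unfolding simple_graph_def by blast
  interpret sg E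
    by unfold_locales (use EV in blast)+
  have nbV: "y \<in> nb V x \<longleftrightarrow> E x y" for x y using EV by (auto simp: nb_def)
  have closed_nb: "V \<subseteq> X" if "x \<in> X" "X \<subseteq> V" "\<forall>u\<in>X. nb V u \<subseteq> X" for x X
    using closed_all[OF sg conn that(1,2)] that(3) nbV by blast
  have val: "valid V"
    unfolding valid_def
  proof (intro conjI ballI notI)
    fix x assume x: "x \<in> V"
    assume nbe: "nb V x = {}"
    have "card V \<ge> 2" using assms(2) by simp
    then obtain y where y: "y \<in> V" "y \<noteq> x"
      using x by (metis card_1_singletonE card_le_Suc0_iff_eq fin not_less_eq_eq numeral_2_eq_2 subsetI singletonD order.trans card_mono)
    have "E\<^sup>*\<^sup>* x y" using conn x y unfolding connected_graph_def by blast
    then obtain z where "E x z" using y(2) by (metis converse_rtranclpE)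
    then show False using nbe nbV by blast
  next
    assume "\<exists>u\<in>V. \<exists>v. nb V u = {v} \<and> nb V v = {u}"
    then obtain u v where u: "u \<in> V" and uv: "nb V u = {v}" "nb V v = {u}" by blast
    have "v \<in> V" using uv nb_sub by blast
    then have "V \<subseteq> {u, v}" using closed_nb[of u "{u,v}"] u uv by auto
    then have "card V \<le> card {u,v}" by (simp add: card_mono)
    moreover have "card {u,v} \<le> 2" by (simp add: card_insert_if)
    ultimately have "card V \<le> 2" by linarith
    then show False using assms(2) by simp
  next
    assume "\<exists>a\<in>V. \<exists>b c d. distinct [a,b,c,d] \<and> nb V a = {b} \<and> nb V b = {a,c} \<and> nb V c = {b,d} \<and> nb V d = {c}"
    then obtain a b c d where a: "a \<in> V" and dd: "distinct [a,b,c,d]"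
      and n: "nb V a = {b}" "nb V b = {a,c}" "nb V c = {b,d}" "nb V d = {c}" by blast
    have bcd: "b \<in> V" "c \<in> V" "d \<in> V" using n nb_sub by blast+
    have Veq: "V = {a,b,c,d}"
    proof
      show "V \<subseteq> {a,b,c,d}" using closed_nb[of a "{a,b,c,d}"] a bcd n by auto
      show "{a,b,c,d} \<subseteq> V" using a bcd by auto
    qed
    define f where "f x = (if x = a then 0 else if x = b then 1 else if x = c then 2 else (3::nat))" for x
    have "graph_iso V E (path_vertices 4) (path_edges 4)"
      unfolding graph_iso_def
    proof (intro exI conjI)
      show "bij_betw f V (path_vertices 4)"
        unfolding bij_betw_def
      proof
        show "inj_on f V" using dd unfolding Veq inj_on_def f_def by auto
        show "f ` V = path_vertices 4"
        proof
          show "f ` V \<subseteq> path_vertices 4" unfolding Veq path_vertices_def f_def by auto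
          show "path_vertices 4 \<subseteq> f ` V"
          proof
            fix i assume "i \<in> path_vertices 4"
            then have "i = 0 \<or> i = 1 \<or> i = 2 \<or> i = 3" unfolding path_vertices_def by auto
            then show "i \<in> f ` V"
              using dd unfolding Veq f_def
              by (elim disjE) (auto simp: image_iff intro: bexI[of _ a] bexI[of _ b] bexI[of _ c] bexI[of _ d])
          qed
        qed
      qed
      have e: "E x y \<longleftrightarrow> y \<in> nb V x" for x y using nbV by simp
      show "\<forall>u\<in>V. \<forall>v\<in>V. E u v \<longleftrightarrow> path_edges 4 (f u) (f v)"
        unfolding Veq using dd by (simp add: e n f_def path_edges_def) blast
    qed
    then show False using assms(3) by blast
  qed
  obtain C D where C: "identifying_code V E C" and D: "dominating_set V E D"
    and cd: "card C + card D \<le> card V"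
    using main_good[OF fin acy val] unfolding good_def by blast
  have "id_code_number V E \<le> enat (card C)"
    unfolding id_code_number_def using C by (auto intro: INF_lower)
  moreover have "domination_number V E \<le> card D"
  proof -
    have "card ` {D. dominating_set V E D} \<subseteq> card ` Pow V"
      unfolding dominating_set_def by auto
    then have "finite (card ` {D. dominating_set V E D})"
      using fin by (meson finite_Pow_iff finite_imageI finite_subset)
    then show ?thesis unfolding domination_number_def using D by (auto intro: Min_le)
  qed
  ultimately show ?thesis using cd by (simp add: order_trans)
qed



end
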